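(* Let $\nu>-1$. Then there exist constants $C,c>0$ such that $$|\delta^*p_t^{\nu+1}(x,y)|\le \frac Ct\exp\Big(-\frac{|x-y|^2}{ct}\Big)\Big(1+\frac{\sqrt t}{x}\Big)^{\gamma_\nu}$$ for all $t>0$ and $x,y\in(0,\infty)$, where $\delta^*=-\partial_x+x-\frac1x(\nu+\frac12)$ acts in the variable $x$.
   Context: For $\alpha>-1$, $p_t^\alpha(x,y)$ is the integral kernel of $e^{-t\mathcal L_\alpha}$, where $\mathcal L_\alpha$ is the one-dimensional Laguerre operator on $(0,\infty)$ (eigenfunctions the Laguerre functions $\varphi_k^\alpha$, eigenvalues $4k+2\alpha+2$); explicitly, with $r=e^{-4t}$, $p_t^\alpha(x,y)=\frac{2(rxy)^{1/2}}{1-r}\exp\big(-\frac12\frac{1+r}{1-r}(x^2+y^2)\big)I_\alpha\big(\frac{2r^{1/2}}{1-r}xy\big)$, $I_\alpha$ the modified Bessel function of the first kind. $\gamma_\nu=-1/2-\nu$ if $-1<\nu<-1/2$ and $\gamma_\nu=0$ if $\nu\ge-1/2$. *)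

theory Defs
  imports "HOL-Analysis.Analysis"
begin

definition besselI :: "real \<Rightarrow> real \<Rightarrow> real" where
  "besselI a z = (\<Sum>m. (z / 2) powr (2 * real m + a) / (fact m * Gamma (real m + a + 1)))"

definition laguerre_heat_kernel :: "real \<Rightarrow> real \<Rightarrow> real \<Rightarrow> real \<Rightarrow> real" where
  "laguerre_heat_kernel a t x y =
     (let r = exp (-4 * t) in
      2 * sqrt (r * x * y) / (1 - r)
        * exp (- (1/2) * ((1 + r) / (1 - r)) * (x^2 + y^2))
        * besselI a (2 * sqrt r / (1 - r) * x * y))"

definition gamma_exp :: "real \<Rightarrow> real" where
  "gamma_exp \<nu> = (if -1 < \<nu> \<and> \<nu> < -1/2 then -1/2 - \<nu> else 0)"

definition delta_star :: "real \<Rightarrow> (real \<Rightarrow> real) \<Rightarrow> real \<Rightarrow> real" where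
  "delta_star \<nu> f x = - deriv f x + x * f x - (\<nu> + 1/2) / x * f x"

end

theory Submission
  imports Defs
begin

lemma Gamma_ge1_2: assumes "(u::real) \<ge> 2" shows "Gamma u \<ge> 1"
proof (cases "u = 2")
  case True then show ?thesis by (simp add: Gamma_numeral)
next
  case False
  then have "Gamma (2::real) < Gamma u" using assms by (intro Gamma_real_strict_mono) auto
  then show ?thesis by (simp add: Gamma_numeral)
qed

lemma Gamma_ge_half: assumes "(u::real) > 0" shows "Gamma u \<ge> 1/2"
proof -
  have rec: "Gamma (v+1) = v * Gamma v" if "v > 0" for v :: real
    using that by (intro Gamma_plus1) (auto elim!: nonpos_Ints_cases)
  have A: "Gamma v \<ge> 1/2" if "v > 1" for v :: real
  proof (cases "v \<ge> 2")
    case True then show ?thesis using Gamma_ge1_2 by force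
  next
    case False
    have "Gamma (v+1) \<ge> 1" using that by (intro Gamma_ge1_2) auto
    then have "v * Gamma v \<ge> 1" using rec[of v] that by simp
    moreover have "v * Gamma v \<le> 2 * Gamma v" using False that
      by (intro mult_right_mono) (auto intro: less_imp_le Gamma_real_pos)
    ultimately show ?thesis by simp
  qed
  show ?thesis
  proof (cases "u > 1")
    case True then show ?thesis using A by blast
  next
    case False
    have "Gamma (u+1) \<ge> 1/2" using A assms by simp
    then have "u * Gamma u \<ge> 1/2" using rec[of u] assms by simp
    moreover have "u * Gamma u \<le> 1 * Gamma u" using False assms
      by (intro mult_right_mono) (auto intro: less_imp_le Gamma_real_pos)
    ultimately show ?thesis by simp
  qed
qed


definition gcoef :: "real \<Rightarrow> nat \<Rightarrow> real" where
  "gcoef a m = 1 / (fact m * Gamma (real m + a + 1))"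

definition gser :: "real \<Rightarrow> real \<Rightarrow> real" where
  "gser a u = (\<Sum>m. gcoef a m * u ^ m)"

lemma gcoef_pos: "a > -1 \<Longrightarrow> gcoef a m > 0"
  unfolding gcoef_def by (intro divide_pos_pos mult_pos_pos Gamma_real_pos) auto

lemma gcoef_le: assumes "a > -1" shows "gcoef a m \<le> 2 / fact m"
proof -
  have "Gamma (real m + a + 1) \<ge> 1/2" using assms by (intro Gamma_ge_half) auto
  then have X: "fact m * Gamma (real m + a + 1) \<ge> fact m * (1/2)"
    by (intro mult_left_mono) auto
  have "1 / (fact m * Gamma (real m + a + 1)) \<le> 1 / (fact m * (1/2))"
    using Gamma_real_pos[of "real m + a + 1"] assms
    by (intro divide_left_mono[OF X]) (auto intro!: mult_pos_pos)
  then show ?thesis unfolding gcoef_def by simp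
qed

lemma gser_summable_abs: assumes "a > -1" shows "summable (\<lambda>m. \<bar>gcoef a m * u ^ m\<bar>)"
proof (rule summable_comparison_test[OF _ summable_mult[OF summable_exp[of "\<bar>u\<bar>"], of 2]])
  show "\<exists>N. \<forall>n\<ge>N. norm \<bar>gcoef a n * u ^ n\<bar> \<le> 2 * (inverse (fact n) * \<bar>u\<bar> ^ n)"
  proof (intro exI allI impI)
    fix n :: nat
    have "\<bar>gcoef a n * u ^ n\<bar> = gcoef a n * \<bar>u\<bar> ^ n"
      using gcoef_pos[OF assms, of n] by (simp add: abs_mult power_abs)
    also have "\<dots> \<le> (2 / fact n) * \<bar>u\<bar> ^ n"
      by (intro mult_right_mono gcoef_le assms) auto
    finally show "norm \<bar>gcoef a n * u ^ n\<bar> \<le> 2 * (inverse (fact n) * \<bar>u\<bar> ^ n)"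
      by (simp add: field_simps)
  qed
qed

lemma gser_summable: "a > -1 \<Longrightarrow> summable (\<lambda>m. gcoef a m * u ^ m)"
  by (rule summable_rabs_cancel[OF gser_summable_abs])

lemma diffs_gcoef: assumes "a > -1" shows "diffs (gcoef a) = gcoef (a + 1)"
proof
  fix n
  have e: "real (Suc n) + a + 1 = real n + (a + 1) + 1" by simp
  have "diffs (gcoef a) n = real (Suc n) / (real (Suc n) * fact n * Gamma (real n + (a + 1) + 1))"
    unfolding diffs_def gcoef_def e by (simp only: fact_Suc of_nat_mult) simp
  also have "\<dots> = gcoef (a + 1) n" unfolding gcoef_def by (simp del: of_nat_Suc)
  finally show "diffs (gcoef a) n = gcoef (a + 1) n" .
qed

lemma gser_deriv: assumes "a > -1"
  shows "(gser a has_real_derivative gser (a + 1) u) (at u)"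
proof -
  have "((\<lambda>x. \<Sum>n. gcoef a n * x^n) has_field_derivative (\<Sum>n. diffs (gcoef a) n * u^n)) (at u)"
    by (rule termdiffs_strong_converges_everywhere) (rule gser_summable[OF assms])
  moreover have "gser a = (\<lambda>x. \<Sum>n. gcoef a n * x^n)" by (simp add: fun_eq_iff gser_def)
  moreover have "gser (a+1) u = (\<Sum>n. diffs (gcoef a) n * u^n)" by (simp add: gser_def diffs_gcoef[OF assms])
  ultimately show ?thesis by simp
qed

lemma aux_frac: fixes a b s F G U :: real
  assumes "s = a + b" "s \<noteq> 0" "F \<noteq> 0" "G \<noteq> 0"
  shows "a * (1 / (F * (s * G)) * U) + b * (1 / (F * (s * G))) * U = 1 / (F * G) * U"
proof -
  have "a * (1 / (F * (s * G)) * U) + b * (1 / (F * (s * G))) * U = (a + b) * U / (F * (s * G))"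
    by (simp add: field_simps) (simp add: add_divide_distrib)
  also have "\<dots> = s * U / (s * (F * G))" using assms(1) by (simp add: ac_simps)
  also have "\<dots> = U / (F * G)" using assms(2) by simp
  finally show ?thesis by simp
qed

lemma gser_rec: assumes "a > 0"
  shows "gser (a - 1) u = a * gser a u + u * gser (a + 1) u"
proof -
  define f where "f m = real m * gcoef a m * u ^ m" for m
  have s1: "(\<lambda>m. gcoef (a+1) m * u ^ m) sums gser (a+1) u"
    unfolding gser_def using gser_summable[of "a+1" u] assms by (simp add: summable_sums)
  have "(\<lambda>k. f (Suc k)) = (\<lambda>k. u * (gcoef (a+1) k * u ^ k))"
  proof
    fix k
    have e: "Gamma (real (Suc k) + a + 1) = Gamma (real k + (a + 1) + 1)" by (simp add: add_ac)
    have "f (Suc k) = real (Suc k) * u ^ Suc k / (real (Suc k) * fact k * Gamma (real k + (a + 1) + 1))"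
      unfolding f_def gcoef_def e by (simp only: fact_Suc of_nat_mult) simp
    also have "\<dots> = u * (gcoef (a+1) k * u ^ k)" unfolding gcoef_def by (simp del: of_nat_Suc)
    finally show "f (Suc k) = u * (gcoef (a+1) k * u ^ k)" .
  qed
  then have "(\<lambda>k. f (Suc k)) sums (u * gser (a+1) u)"
    using sums_mult[OF s1, of u] by simp
  then have s2: "f sums (u * gser (a+1) u)" using sums_Suc_iff[of f] by (simp add: f_def)
  have s3: "(\<lambda>m. a * (gcoef a m * u ^ m)) sums (a * gser a u)"
    unfolding gser_def using gser_summable[of a u] assms
    by (intro sums_mult) (simp add: summable_sums)
  have "(\<lambda>m. a * (gcoef a m * u ^ m) + f m) sums (a * gser a u + u * gser (a+1) u)"
    by (rule sums_add[OF s3 s2])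
  moreover have "(\<lambda>m. a * (gcoef a m * u ^ m) + f m) = (\<lambda>m. gcoef (a - 1) m * u ^ m)"
  proof
    fix m
    have g: "Gamma (real m + a + 1) = (real m + a) * Gamma (real m + a)"
      using assms by (intro Gamma_plus1) (auto elim!: nonpos_Ints_cases)
    have pos: "Gamma (real m + a) > 0" using assms by (intro Gamma_real_pos) auto
    have e2: "real m + (a - 1) + 1 = real m + a" by simp
    show "a * (gcoef a m * u ^ m) + f m = gcoef (a - 1) m * u ^ m"
      unfolding f_def gcoef_def g e2
      by (rule aux_frac[where s="real m + a" and b="real m" and a=a and F="fact m" and G="Gamma (real m + a)" and U="u^m"])
        (simp add: add.commute, use assms in linarith, simp, use pos in linarith)
  qed
  ultimately show ?thesis unfolding gser_def using sums_unique by fastforce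
qed

lemma besselI_gser: assumes "a > -1" "w > 0"
  shows "besselI a w = (w/2) powr a * gser a ((w/2)^2)"
proof -
  have "(\<lambda>m. (w / 2) powr (2 * real m + a) / (fact m * Gamma (real m + a + 1)))
      = (\<lambda>m. (w/2) powr a * (gcoef a m * ((w/2)^2) ^ m))"
  proof
    fix m
    have "(w/2) powr (2 * real m + a) = (w/2) powr (real (2*m)) * (w/2) powr a"
      by (simp add: powr_add)
    also have "(w/2) powr (real (2*m)) = (w/2)^(2*m)" using assms by (intro powr_realpow) simp
    also have "(w/2)^(2*m) = ((w/2)^2)^m" by (simp add: power_mult)
    finally have p: "(w/2) powr (2 * real m + a) = (w/2) powr a * ((w/2)^2)^m" by simp
    show "(w / 2) powr (2 * real m + a) / (fact m * Gamma (real m + a + 1))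
        = (w/2) powr a * (gcoef a m * ((w/2)^2) ^ m)" unfolding gcoef_def p by simp
  qed
  then have "besselI a w = (\<Sum>m. (w/2) powr a * (gcoef a m * ((w/2)^2) ^ m))"
    unfolding besselI_def by simp
  also have "\<dots> = (w/2) powr a * gser a ((w/2)^2)"
    unfolding gser_def by (rule suminf_mult[OF gser_summable[OF assms(1)]])
  finally show ?thesis .
qed

lemma besselI_deriv: assumes "a > 0" "w > 0"
  shows "(besselI a has_real_derivative (besselI (a - 1) w - a / w * besselI a w)) (at w)"
proof -
  define u where "u = (w/2)^2"
  have d1: "((\<lambda>v. (v/2) powr a) has_real_derivative a * (w/2) powr (a - 1) * (1/2)) (at w)"
    using DERIV_fun_powr[of "\<lambda>v. v/2" "1/2" w a] assms by (simp add: DERIV_cdivide[OF DERIV_ident])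
  have dsq: "((\<lambda>v. (v/2)^2) has_real_derivative w/2) (at w)"
    by (auto intro!: derivative_eq_intros)
  have d2: "((\<lambda>v. gser a ((v/2)^2)) has_real_derivative gser (a+1) u * (w/2)) (at w)"
    unfolding u_def using DERIV_chain2[OF gser_deriv dsq] assms by simp
  have d3: "((\<lambda>v. (v/2) powr a * gser a ((v/2)^2)) has_real_derivative
      a * (w/2) powr (a - 1) * (1/2) * gser a u + gser (a+1) u * (w/2) * (w/2) powr a) (at w)"
    using DERIV_mult[OF d1 d2] unfolding u_def by simp
  have d4: "(besselI a has_real_derivative
      a * (w/2) powr (a - 1) * (1/2) * gser a u + gser (a+1) u * (w/2) * (w/2) powr a) (at w)"
  proof (rule has_field_derivative_transform_within_open[OF d3, of "{0<..}"])
    show "open {0::real<..}" by simp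
    show "w \<in> {0<..}" using assms by simp
    fix v :: real assume "v \<in> {0<..}"
    then show "(v/2) powr a * gser a ((v/2)^2) = besselI a v"
      using besselI_gser[of a v] assms by simp
  qed
  have pa: "(w/2) powr a = (w/2) powr (a - 1) * (w/2)"
    using assms powr_add[of "w/2" "a - 1" 1] by simp
  have b1: "besselI (a - 1) w = (w/2) powr (a - 1) * gser (a - 1) u"
    unfolding u_def using assms by (intro besselI_gser) auto
  have b0: "besselI a w = (w/2) powr a * gser a u"
    unfolding u_def using assms by (intro besselI_gser) auto
  have "a * (w/2) powr (a - 1) * (1/2) * gser a u + gser (a+1) u * (w/2) * (w/2) powr a
      = besselI (a - 1) w - a / w * besselI a w"
    unfolding b1 b0 gser_rec[OF assms(1)] pa u_def using assms
    by (simp add: field_simps power2_eq_square)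
  then show ?thesis using d4 by simp
qed


lemma delta_alg:
  fixes x y q d r \<rho> \<alpha> P E B B0 \<nu> :: real
  assumes "x \<noteq> 0" "y \<noteq> 0" "q \<noteq> 0" "d \<noteq> 0" "\<alpha> = (1 + r) / d" "d = 1 - r" "q = 2 * \<rho> / d"
  shows "- ((P / (2 * x) * E + E * (- \<alpha> * x) * P) * B + (B0 - (\<nu> + 1) / (q * x * y) * B) * (q * y) * (P * E))
      + x * (P * E * B) - (\<nu> + 1/2) / x * (P * E * B)
    = (2 / d) * P * E * (x * B - \<rho> * y * B0)"
proof -
  have "- ((P / (2 * x) * E + E * (- \<alpha> * x) * P) * B + (B0 - (\<nu> + 1) / (q * x * y) * B) * (q * y) * (P * E))
      + x * (P * E * B) - (\<nu> + 1/2) / x * (P * E * B)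
    = P * E * ((\<alpha> + 1) * x * B - q * y * B0)"
    using assms(1-3) by (simp add: field_simps)
  also have "\<alpha> + 1 = 2 / d"
  proof -
    have ad: "\<alpha> * d = 1 + r" using assms(4,5) by simp
    have "(\<alpha> + 1) * d = \<alpha> * d + d" by (simp add: algebra_simps)
    also have "\<dots> = 2" using ad assms(6) by linarith
    finally have "(\<alpha> + 1) * d = 2" .
    then show ?thesis using assms(4) by (simp add: eq_divide_eq)
  qed
  finally have 1: "- ((P / (2 * x) * E + E * (- \<alpha> * x) * P) * B + (B0 - (\<nu> + 1) / (q * x * y) * B) * (q * y) * (P * E))
      + x * (P * E * B) - (\<nu> + 1/2) / x * (P * E * B) = P * E * (2 / d * x * B - q * y * B0)" .
  have 2: "P * E * (2 / d * x * B - q * y * B0) = (2 / d) * P * E * (x * B - \<rho> * y * B0)"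
    unfolding assms(7) by (simp add: right_diff_distrib mult_ac diff_divide_distrib)
  show ?thesis unfolding 1 2 ..
qed

lemma delta_formula:
  assumes nu: "\<nu> > -1" and t: "t > 0" and x: "x > 0" and y: "y > 0"
  shows "delta_star \<nu> (\<lambda>z. laguerre_heat_kernel (\<nu> + 1) t z y) x =
     (2 / (1 - exp (-4*t))) * (2 * sqrt (exp (-4*t)) * sqrt (x*y) / (1 - exp (-4*t)))
     * exp (- (1/2) * ((1 + exp (-4*t)) / (1 - exp (-4*t))) * (x^2 + y^2))
     * (x * besselI (\<nu> + 1) (2 * sqrt (exp (-4*t)) / (1 - exp (-4*t)) * x * y)
        - sqrt (exp (-4*t)) * y * besselI \<nu> (2 * sqrt (exp (-4*t)) / (1 - exp (-4*t)) * x * y))"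
proof -
  define r where "r = exp (-4*t)"
  define d where "d = 1 - r"
  define \<rho> where "\<rho> = sqrt r"
  define q where "q = 2 * \<rho> / d"
  define \<alpha> where "\<alpha> = (1 + r) / d"
  have r01: "0 < r" "r < 1" using t by (auto simp: r_def)
  have dpos: "d > 0" using r01 by (simp add: d_def)
  have rhopos: "\<rho> > 0" using r01 by (simp add: \<rho>_def)
  have qpos: "q > 0" using dpos rhopos by (simp add: q_def)
  define Pf where "Pf z = 2 * (\<rho> * sqrt y) * sqrt z / d" for z
  define Ef where "Ef z = exp (- (1/2) * \<alpha> * (z^2 + y^2))" for z
  define Bf where "Bf z = besselI (\<nu> + 1) (q * z * y)" for z
  have K: "(\<lambda>z. laguerre_heat_kernel (\<nu> + 1) t z y) = (\<lambda>z. Pf z * Ef z * Bf z)"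
  proof
    fix z
    show "laguerre_heat_kernel (\<nu> + 1) t z y = Pf z * Ef z * Bf z"
      unfolding laguerre_heat_kernel_def Let_def Pf_def Ef_def Bf_def q_def \<alpha>_def d_def \<rho>_def r_def
      by (simp add: real_sqrt_mult mult_ac)
  qed
  have dP: "(Pf has_real_derivative Pf x / (2 * x)) (at x)"
  proof -
    have "(Pf has_real_derivative 2 * (\<rho> * sqrt y) * (inverse (sqrt x) / 2) / d) (at x)"
      unfolding Pf_def[abs_def] using x by (intro DERIV_cdivide DERIV_cmult DERIV_real_sqrt)
    moreover have "2 * (\<rho> * sqrt y) * (inverse (sqrt x) / 2) / d = Pf x / (2 * x)"
      unfolding Pf_def using x dpos
      by (simp add: field_simps)
    ultimately show ?thesis by simp
  qed
  have dE: "(Ef has_real_derivative Ef x * (- \<alpha> * x)) (at x)"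
    unfolding Ef_def[abs_def] by (auto intro!: derivative_eq_intros simp: power2_eq_square)
  have w: "q * x * y > 0" using qpos x y by simp
  have dB: "(Bf has_real_derivative (besselI \<nu> (q*x*y) - (\<nu> + 1) / (q*x*y) * besselI (\<nu>+1) (q*x*y)) * (q * y)) (at x)"
  proof -
    have inner: "((\<lambda>z. q * z * y) has_real_derivative q * y) (at x)"
      by (auto intro!: derivative_eq_intros)
    show ?thesis unfolding Bf_def[abs_def]
      using DERIV_chain2[OF besselI_deriv[of "\<nu>+1" "q*x*y"] inner] nu w by simp
  qed
  have dK: "((\<lambda>z. Pf z * Ef z * Bf z) has_real_derivative
      (Pf x / (2 * x) * Ef x + Ef x * (- \<alpha> * x) * Pf x) * Bf x
      + (besselI \<nu> (q*x*y) - (\<nu> + 1) / (q*x*y) * besselI (\<nu>+1) (q*x*y)) * (q * y) * (Pf x * Ef x)) (at x)"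
    using DERIV_mult[OF DERIV_mult[OF dP dE] dB] by simp
  have "delta_star \<nu> (\<lambda>z. laguerre_heat_kernel (\<nu> + 1) t z y) x
      = (2 / d) * Pf x * Ef x * (x * Bf x - \<rho> * y * besselI \<nu> (q*x*y))"
    unfolding delta_star_def K DERIV_imp_deriv[OF dK] unfolding Bf_def
    by (rule delta_alg) (use x y qpos dpos in \<open>auto simp: \<alpha>_def d_def q_def\<close>)
  moreover have "Pf x = 2 * sqrt (exp (-4*t)) * sqrt (x*y) / (1 - exp (-4*t))"
    unfolding Pf_def \<rho>_def r_def d_def by (simp add: real_sqrt_mult mult_ac)
  ultimately show ?thesis
    unfolding Ef_def Bf_def q_def \<alpha>_def d_def \<rho>_def r_def by simp
qed


lemma swap_frac: "(a - b) / (c - d) = (b - a) / (d - (c::real))"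
proof -
  have "(a - b) / (c - d) = (- (b - a)) / (- (d - c))" by simp
  also have "\<dots> = (b - a) / (d - c)" by (rule minus_divide_divide)
  finally show ?thesis .
qed

lemma div_le_div_cross: "0 < b \<Longrightarrow> 0 < d \<Longrightarrow> a * d \<le> c * b \<Longrightarrow> a / b \<le> c / (d::real)"
  by (simp add: field_simps)

lemma ln1p_upper: assumes "(x::real) \<ge> 0" shows "ln (1 + x) \<le> x - x^2/2 + x^3/3"
proof -
  define f where "f z = z - z^2/2 + z^3/3 - ln (1 + z)" for z :: real
  have "f 0 \<le> f x"
  proof (rule DERIV_nonneg_imp_nondecreasing[OF assms])
    fix z :: real assume z: "0 \<le> z" "z \<le> x"
    have "(f has_real_derivative 1 - z + z^2 - 1 / (1 + z)) (at z)"
      unfolding f_def[abs_def] using z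
      by (auto intro!: derivative_eq_intros simp: power2_eq_square field_simps)
    moreover have "1 - z + z^2 - 1 / (1 + z) = z^3 / (1 + z)"
      using z by (simp add: field_simps power2_eq_square power3_eq_cube)
    moreover have "z^3 / (1 + z) \<ge> 0" using z by simp
    ultimately show "\<exists>y. (f has_real_derivative y) (at z) \<and> 0 \<le> y" by auto
  qed
  then show ?thesis by (simp add: f_def)
qed

lemma stirling_step_poly: assumes "(n::real) \<ge> 1"
  shows "(n + 1/2) * (1/n - 1/(2*n^2) + 1/(3*n^3)) \<le> 1 + 1/(2*n) - 1/(2*(n+1))"
proof -
  have n0: "n > 0" using assms by simp
  have "(n + 1/2) * (1/n - 1/(2*n^2) + 1/(3*n^3)) = 1 + (n + 2) / (12 * n^3)"
    using n0 by (simp add: field_simps power2_eq_square power3_eq_cube)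
  moreover have "1/(2*n) - 1/(2*(n+1)) = 1 / (2 * n * (n + 1))"
    using n0 by (simp add: field_simps)
  then have "1 + 1/(2*n) - 1/(2*(n+1)) = 1 + 1 / (2 * n * (n + 1))" by simp
  moreover have "(n + 2) / (12 * n^3) \<le> 1 / (2 * n * (n + 1))"
  proof -
    have "(5*n + 2) * (n - 1) \<ge> 0" using assms by simp
    then have h: "2 + 3 * n \<le> 5 * n^2" by (simp add: algebra_simps power2_eq_square)
    have "2 * n * (2 + 3 * n) \<le> 2 * n * (5 * n^2)" using n0 h by (intro mult_left_mono) auto
    then have "(n + 2) * (2 * n * (n + 1)) \<le> 12 * n^3"
      by (simp add: algebra_simps power3_eq_cube power2_eq_square)
    moreover have p1: "0 < 12 * n^3" using n0 by simp
    moreover have p2: "0 < 2 * n * (n+1)" using n0 by simp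
    ultimately show ?thesis using div_le_div_cross[OF p1 p2, of "n+2" 1] by simp
  qed
  ultimately show ?thesis by simp
qed

lemma stirling_nat_aux: assumes "n \<ge> 1"
  shows "ln (fact n) - (real n + 1/2) * ln (real n) + real n - 1 / (2 * real n) \<ge> 1/2"
  using assms
proof (induction n rule: dec_induct)
  case base then show ?case by simp
next
  case (step n)
  define m where "m = real n"
  have m1: "m \<ge> 1" using step.hyps by (simp add: m_def)
  have lnfact: "ln (fact (Suc n) :: real) = ln (m + 1) + ln (fact n)"
    using m1 by (simp add: m_def ln_mult add.commute)
  have e1: "1 + 1/m = (m + 1) / m" using m1 by (simp add: field_simps)
  have "ln (m + 1) - ln m = ln (1 + 1/m)"
    unfolding e1 using m1 by (simp add: ln_div)
  also have "\<dots> \<le> 1/m - (1/m)^2/2 + (1/m)^3/3"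
    using m1 by (intro ln1p_upper) simp
  also have "\<dots> = 1/m - 1/(2*m^2) + 1/(3*m^3)" by (simp add: power_divide)
  finally have L: "ln (m + 1) - ln m \<le> 1/m - 1/(2*m^2) + 1/(3*m^3)" .
  have "(m + 1/2) * (ln (m + 1) - ln m) \<le> (m + 1/2) * (1/m - 1/(2*m^2) + 1/(3*m^3))"
    using L m1 by (intro mult_left_mono) auto
  also have "\<dots> \<le> 1 + 1/(2*m) - 1/(2*(m+1))" by (rule stirling_step_poly[OF m1])
  finally have S: "(m + 1/2) * (ln (m + 1) - ln m) \<le> 1 + 1/(2*m) - 1/(2*(m+1))" .
  have IH: "ln (fact n) - (m + 1/2) * ln m + m - 1 / (2 * m) \<ge> 1/2"
    using step.IH by (simp add: m_def)
  have "ln (fact (Suc n)) - (real (Suc n) + 1/2) * ln (real (Suc n)) + real (Suc n) - 1 / (2 * real (Suc n))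
      = (ln (fact n) - (m + 1/2) * ln m + m - 1 / (2 * m))
        + (1 + 1/(2*m) - 1/(2*(m+1)) - (m + 1/2) * (ln (m + 1) - ln m))"
    unfolding lnfact by (simp add: m_def algebra_simps)
  also have "\<dots> \<ge> 1/2" using IH S by linarith
  finally show ?case .
qed

lemma stirling_nat: assumes "n \<ge> 1"
  shows "ln (fact n) \<ge> (real n + 1/2) * ln (real n) - real n + 1/2"
  using stirling_nat_aux[OF assms] assms by (smt (verit) divide_nonneg_nonneg of_nat_0_le_iff)

lemma stirling_real: assumes "(s::real) \<ge> 1"
  shows "ln (Gamma (s + 1)) \<ge> (s + 1/2) * ln s - s - 3/2"
proof -
  define n where "n = nat \<lfloor>s\<rfloor>"
  have n1: "n \<ge> 1" using assms by (simp add: n_def le_nat_iff)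
  have ns: "real n \<le> s" "s < real n + 1" using assms by (simp_all add: n_def)
  define \<theta> where "\<theta> = s - real n"
  have th: "0 \<le> \<theta>" "\<theta> < 1" using ns by (auto simp: \<theta>_def)
  have Gn1: "Gamma (real n + 1) = fact n"
    using Gamma_fact[of n, where 'a=real] by (simp add: add.commute)
  have Gn: "Gamma (real n + 1) = real n * Gamma (real n)"
    using n1 by (intro Gamma_plus1) (auto elim!: nonpos_Ints_cases)
  have Gpos: "Gamma (real n) > 0" using n1 by (intro Gamma_real_pos) simp
  have diff: "ln (Gamma (real n + 1)) - ln (Gamma (real n)) = ln (real n)"
  proof -
    have "ln (real n * Gamma (real n)) = ln (real n) + ln (Gamma (real n))"
      using n1 Gpos by (intro ln_mult_pos) auto
    then show ?thesis unfolding Gn by simp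
  qed
  have main: "ln (Gamma (s + 1)) \<ge> ln (fact n) + \<theta> * ln (real n)"
  proof (cases "\<theta> = 0")
    case True
    then have "s = real n" by (simp add: \<theta>_def)
    then show ?thesis using Gn1 True by simp
  next
    case False
    then have thp: "\<theta> > 0" using th by simp
    let ?f = "ln \<circ> Gamma :: real \<Rightarrow> real"
    have cv: "convex_on {0<..} ?f" by (rule log_convex_Gamma_real)
    have "(?f (real n) - ?f (real n + 1)) / (real n - (real n + 1)) \<le> (?f (real n) - ?f (s + 1)) / (real n - (s + 1))"
      using n1 thp by (intro convex_on_slope_le(1)[OF cv]) (auto simp: \<theta>_def)
    also have "\<dots> \<le> (?f (real n + 1) - ?f (s + 1)) / (real n + 1 - (s + 1))"
      using n1 thp by (intro convex_on_slope_le(2)[OF cv]) (auto simp: \<theta>_def)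
    moreover have "(?f (real n) - ?f (real n + 1)) / (real n - (real n + 1)) = ln (real n)"
      using diff by simp
    moreover have "(?f (real n + 1) - ?f (s + 1)) / (real n + 1 - (s + 1))
        = (ln (Gamma (s + 1)) - ln (Gamma (real n + 1))) / \<theta>"
      unfolding swap_frac[of "?f (real n + 1)"] by (simp add: \<theta>_def)
    ultimately have "ln (real n) \<le> (ln (Gamma (s + 1)) - ln (Gamma (real n + 1))) / \<theta>"
      by simp
    then have "\<theta> * ln (real n) \<le> ln (Gamma (s + 1)) - ln (Gamma (real n + 1))"
      using thp by (simp add: field_simps)
    then show ?thesis using Gn1 by simp
  qed
  have st: "ln (fact n) \<ge> (real n + 1/2) * ln (real n) - real n + 1/2" by (rule stirling_nat[OF n1])
  have lnq: "ln s - ln (real n) \<le> \<theta> / real n"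
  proof -
    have "ln (s / real n) \<le> s / real n - 1" using n1 assms by (intro ln_le_minus_one) simp
    then show ?thesis using n1 assms by (simp add: ln_div \<theta>_def field_simps)
  qed
  have "(s + 1/2) * (ln s - ln (real n)) \<le> (s + 1/2) * (\<theta> / real n)"
    using lnq assms by (intro mult_left_mono) auto
  also have "\<dots> \<le> \<theta> + 2"
  proof -
    have "(real n + \<theta> + 1/2) * \<theta> \<le> (\<theta> + 2) * real n"
    proof -
      have "\<theta> * \<theta> \<le> 1 * 1" using th by (intro mult_mono) auto
      then show ?thesis using n1 th by (simp add: algebra_simps)
    qed
    then show ?thesis using n1 by (simp add: \<theta>_def field_simps)
  qed
  finally have "(s + 1/2) * (ln s - ln (real n)) \<le> \<theta> + 2" .
  then have "(s + 1/2) * ln s \<le> (s + 1/2) * ln (real n) + \<theta> + 2" by (simp add: algebra_simps)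
  moreover have "(s + 1/2) * ln (real n) = (real n + 1/2) * ln (real n) + \<theta> * ln (real n)"
    by (simp add: \<theta>_def algebra_simps)
  ultimately show ?thesis using main st by (simp add: \<theta>_def)
qed


lemma ln2_le1: "ln (2::real) \<le> 1"
proof -
  have "(2::real) \<le> exp 1" using exp_ge_add_one_self[of "1::real"] by simp
  then have "ln (2::real) \<le> ln (exp 1)" by (subst ln_le_cancel_iff) auto
  then show ?thesis by simp
qed

lemma ln60_ge3: "ln (60::real) \<ge> 3"
proof -
  have "exp (3::real) = exp 1 * exp 1 * exp 1" by (simp flip: exp_add)
  also have "\<dots> \<le> 3 * 3 * 3" using exp_le by (intro mult_mono) auto
  finally have "exp (3::real) \<le> 60" by simp
  then show ?thesis by (simp add: ln_ge_iff)
qed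

lemma ln_le_half: assumes "(x::real) > 0" shows "ln x \<le> x / 2"
proof -
  have "ln (x / 2) \<le> x / 2 - 1" using assms by (intro ln_le_minus_one) simp
  then have "ln x - ln 2 \<le> x / 2 - 1" using assms by (simp add: ln_div)
  then show ?thesis using ln2_le1 by linarith
qed

lemma mode_bound: assumes l: "(l::real) \<ge> 1" and s: "s > -1"
  shows "l powr s / Gamma (s + 1) \<le> 60 * exp l / sqrt l"
proof -
  have l0: "l > 0" using l by simp
  have Gp: "Gamma (s + 1) > 0" using s by (intro Gamma_real_pos) simp
  have lhs: "l powr s / Gamma (s + 1) = exp (s * ln l - ln (Gamma (s + 1)))"
    using l0 Gp by (simp add: powr_def exp_diff)
  have rhs: "60 * exp l / sqrt l = exp (ln 60 + l - ln l / 2)"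
    using l0 by (simp add: exp_add exp_diff ln_sqrt[symmetric])
  have lnl: "ln l \<ge> 0" using l by simp
  have lnh: "ln l \<le> l / 2" using ln_le_half[OF l0] .
  have l60: "ln (60::real) \<ge> 3" by (rule ln60_ge3)
  have key: "s * ln l - ln (Gamma (s + 1)) \<le> ln 60 + l - ln l / 2"
  proof (cases "s \<le> 1")
    case True
    have "s * ln l \<le> 1 * ln l" using True lnl by (intro mult_right_mono) auto
    moreover have "ln (Gamma (s + 1)) \<ge> ln (1/2)"
      using Gamma_ge_half[of "s+1"] s by (subst ln_le_cancel_iff) auto
    moreover have "ln (1/2::real) = - ln 2" by (simp add: ln_div)
    ultimately show ?thesis using ln2_le1 lnh l60 lnl by linarith
  next
    case False
    then have s1: "s \<ge> 1" by simp
    have st: "ln (Gamma (s + 1)) \<ge> (s + 1/2) * ln s - s - 3/2" by (rule stirling_real[OF s1])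
    have lns: "ln s \<ge> 0" using s1 by simp
    show ?thesis
    proof (cases "s \<ge> l / 4")
      case True
      have "ln (l / s) \<le> l / s - 1" using l0 s1 by (intro ln_le_minus_one) simp
      then have "s * ln (l / s) \<le> s * (l / s - 1)" using s1 by (intro mult_left_mono) auto
      moreover have "s * (l / s - 1) = l - s" using s1 by (simp add: field_simps)
      moreover have "ln (l / s) = ln l - ln s" using s1 l0 by (simp add: ln_div)
      ultimately have A: "s * (ln l - ln s) \<le> l - s" by simp
      have "ln (l / 4) \<le> ln s" using True l0 by (subst ln_le_cancel_iff) auto
      moreover have "ln (4::real) = 2 * ln 2"
        using ln_realpow[of 2 2] by simp
      moreover have "ln (l / 4) = ln l - ln 4" using l0 by (simp add: ln_div)
      ultimately have B: "ln s \<ge> ln l - 2" using ln2_le1 by linarith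
      have "s * ln l - ln (Gamma (s + 1)) \<le> s * (ln l - ln s) + s - ln s / 2 + 3/2"
        using st by (simp add: algebra_simps)
      then show ?thesis using A B l60 by linarith
    next
      case False
      have "ln (l / (2 * s)) \<le> l / (2 * s) - 1" using l0 s1 by (intro ln_le_minus_one) simp
      moreover have "ln (l / (2 * s)) = ln l - ln s - ln 2" using l0 s1 by (simp add: ln_div ln_mult_pos)
      ultimately have "ln l - ln s \<le> ln 2 + l / (2 * s) - 1" by linarith
      then have "s * (ln l - ln s) \<le> s * (ln 2 + l / (2 * s) - 1)" using s1 by (intro mult_left_mono) auto
      also have "\<dots> = s * ln 2 + l / 2 - s" using s1 by (simp add: field_simps)
      also have "\<dots> \<le> s + l / 2 - s" using ln2_le1 s1 by (simp add: mult_left_le)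
      finally have A: "s * (ln l - ln s) \<le> l / 2" by simp
      have "s * ln l - ln (Gamma (s + 1)) \<le> s * (ln l - ln s) + s - ln s / 2 + 3/2"
        using st by (simp add: algebra_simps)
      then show ?thesis using A False lns lnh l60 by linarith
    qed
  qed
  show ?thesis unfolding lhs rhs using key by simp
qed


definition Aterm :: "real \<Rightarrow> nat \<Rightarrow> real" where "Aterm l m = l ^ m / fact m"

lemma Aterm_nonneg: "l \<ge> 0 \<Longrightarrow> Aterm l m \<ge> 0" by (simp add: Aterm_def)

lemma Aterm_Suc: "Aterm l (Suc m) = l / real (Suc m) * Aterm l m"
  unfolding Aterm_def by (simp add: field_simps del: of_nat_Suc)

lemma exp_sums: "Aterm l sums exp l"
  using exp_converges[of l] unfolding Aterm_def[abs_def] by (simp add: divide_inverse mult.commute)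

lemma poisson1: "(\<lambda>m. real m * Aterm l m) sums (l * exp l)"
proof -
  have "(\<lambda>m. real (Suc m) * Aterm l (Suc m)) = (\<lambda>m. l * Aterm l m)"
    by (simp add: Aterm_Suc fun_eq_iff del: of_nat_Suc)
  then have "(\<lambda>m. real (Suc m) * Aterm l (Suc m)) sums (l * exp l)"
    using sums_mult[OF exp_sums, of l] by simp
  then show ?thesis using sums_Suc_iff[of "\<lambda>m. real m * Aterm l m"] by simp
qed

lemma poisson2: "(\<lambda>m. real m * (real m - 1) * Aterm l m) sums (l^2 * exp l)"
proof -
  have "(\<lambda>i. real (i + 2) * (real (i + 2) - 1) * Aterm l (i + 2)) = (\<lambda>i. l^2 * Aterm l i)"
  proof
    fix i
    have "Aterm l (i + 2) = l / real (Suc (Suc i)) * (l / real (Suc i) * Aterm l i)"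
      using Aterm_Suc[of l "Suc i"] Aterm_Suc[of l i] by simp
    moreover have "real (i + 2) * (real (i + 2) - 1) = real (Suc (Suc i)) * real (Suc i)" by simp
    ultimately have "real (i + 2) * (real (i + 2) - 1) * Aterm l (i + 2)
        = (real (Suc (Suc i)) * real (Suc i)) * (l / real (Suc (Suc i)) * (l / real (Suc i) * Aterm l i))"
      by simp
    also have "\<dots> = l^2 * Aterm l i" by (simp add: power2_eq_square del: of_nat_Suc)
    finally show "real (i + 2) * (real (i + 2) - 1) * Aterm l (i + 2) = l^2 * Aterm l i" .
  qed
  then have "(\<lambda>i. real (i + 2) * (real (i + 2) - 1) * Aterm l (i + 2)) sums (l^2 * exp l)"
    using sums_mult[OF exp_sums, of "l^2"] by simp
  then show ?thesis
    using sums_iff_shift[of "\<lambda>m. real m * (real m - 1) * Aterm l m" 2] by (simp add: numeral_2_eq_2)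
qed

lemma poisson_var: "(\<lambda>m. Aterm l m * (real m - 1 - l)^2) sums ((l + 1) * exp l)"
proof -
  have s: "(\<lambda>m. real m * (real m - 1) * Aterm l m - (1 + 2*l) * (real m * Aterm l m) + (1 + l)^2 * Aterm l m)
      sums (l^2 * exp l - (1 + 2*l) * (l * exp l) + (1 + l)^2 * exp l)"
    by (intro sums_add sums_diff sums_mult poisson1 poisson2 exp_sums)
  have "(\<lambda>m. real m * (real m - 1) * Aterm l m - (1 + 2*l) * (real m * Aterm l m) + (1 + l)^2 * Aterm l m)
      = (\<lambda>m. Aterm l m * (real m - 1 - l)^2)"
    by (simp add: fun_eq_iff power2_eq_square algebra_simps)
  moreover have "l^2 * exp l - (1 + 2*l) * (l * exp l) + (1 + l)^2 * exp l = (l + 1) * exp l"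
    by (simp add: power2_eq_square algebra_simps)
  ultimately show ?thesis using s by simp
qed


definition bterm :: "real \<Rightarrow> real \<Rightarrow> nat \<Rightarrow> real" where
  "bterm \<mu> l m = l powr (real m + \<mu>) / Gamma (real m + \<mu> + 1)"

lemma bterm_nonneg: "\<mu> > -1 \<Longrightarrow> l > 0 \<Longrightarrow> bterm \<mu> l m \<ge> 0"
  unfolding bterm_def by (intro divide_nonneg_pos) (auto intro!: Gamma_real_pos)

lemma bterm_le: "l \<ge> 1 \<Longrightarrow> \<mu> > -1 \<Longrightarrow> bterm \<mu> l m \<le> 60 * exp l / sqrt l"
  unfolding bterm_def by (rule mode_bound) auto

lemma bterm_Suc: assumes "\<mu> > -1" "l > 0"
  shows "bterm \<mu> l (Suc m) = l / (real m + \<mu> + 1) * bterm \<mu> l m"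
proof -
  have g: "Gamma (real m + \<mu> + 1 + 1) = (real m + \<mu> + 1) * Gamma (real m + \<mu> + 1)"
    using assms by (intro Gamma_plus1) (auto elim!: nonpos_Ints_cases)
  have p: "l powr (real m + \<mu> + 1) = l * l powr (real m + \<mu>)"
    using assms powr_add[of l "real m + \<mu>" 1] by simp
  have e1: "real (Suc m) + \<mu> = real m + \<mu> + 1" by simp
  have e2: "real (Suc m) + \<mu> + 1 = real m + \<mu> + 1 + 1" by simp
  show ?thesis unfolding bterm_def e1 e2 g p by simp
qed

lemma bterm_shift: "bterm (\<mu> + 1) l m = bterm \<mu> l (Suc m)"
proof -
  have e1: "real (Suc m) + \<mu> = real m + (\<mu> + 1)" by simp
  show ?thesis unfolding bterm_def e1 by (simp add: add_ac)
qed

lemma bessel_sums: assumes "\<mu> > -1" "l > 0"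
  shows "(\<lambda>m. Aterm l m * bterm \<mu> l m) sums besselI \<mu> (2 * l)"
proof -
  have eq: "(\<lambda>m. l powr (2 * real m + \<mu>) / (fact m * Gamma (real m + \<mu> + 1)))
      = (\<lambda>m. Aterm l m * bterm \<mu> l m)"
  proof
    fix m
    have "l powr (2 * real m + \<mu>) = l powr (real m) * l powr (real m + \<mu>)"
      by (simp add: powr_add[symmetric])
    also have "l powr (real m) = l ^ m" using assms by (simp add: powr_realpow)
    finally show "l powr (2 * real m + \<mu>) / (fact m * Gamma (real m + \<mu> + 1)) = Aterm l m * bterm \<mu> l m"
      unfolding Aterm_def bterm_def by simp
  qed
  have eq2: "(\<lambda>m. l powr (2 * real m + \<mu>) / (fact m * Gamma (real m + \<mu> + 1)))
      = (\<lambda>m. l powr \<mu> * (gcoef \<mu> m * (l^2) ^ m))"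
  proof
    fix m
    have "l powr (2 * real m + \<mu>) = l powr (real (2*m)) * l powr \<mu>" by (simp add: powr_add)
    also have "l powr (real (2*m)) = l^(2*m)" using assms by (intro powr_realpow) simp
    also have "l^(2*m) = (l^2)^m" by (simp add: power_mult)
    finally show "l powr (2 * real m + \<mu>) / (fact m * Gamma (real m + \<mu> + 1)) = l powr \<mu> * (gcoef \<mu> m * (l^2) ^ m)"
      unfolding gcoef_def by simp
  qed
  have sm: "summable (\<lambda>m. Aterm l m * bterm \<mu> l m)"
    unfolding eq[symmetric] eq2 by (intro summable_mult gser_summable assms)
  have "besselI \<mu> (2 * l) = (\<Sum>m. Aterm l m * bterm \<mu> l m)"
    unfolding besselI_def eq[symmetric] by simp
  then show ?thesis using sm by (simp add: summable_sums)
qed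

lemma bessel_large: assumes l: "l \<ge> 1" and mu: "\<mu> > -1"
  shows "besselI \<mu> (2 * l) \<le> 60 * exp l / sqrt l * exp l"
proof (rule sums_le[OF _ bessel_sums[OF mu] sums_mult[OF exp_sums]])
  fix m
  show "Aterm l m * bterm \<mu> l m \<le> 60 * exp l / sqrt l * Aterm l m"
  proof -
    have "Aterm l m * bterm \<mu> l m \<le> Aterm l m * (60 * exp l / sqrt l)"
      using bterm_le[OF l mu, of m] Aterm_nonneg[of l m] l by (intro mult_left_mono) auto
    then show ?thesis by (simp only: mult.commute)
  qed
qed (use l in simp)


lemma T_alg: fixes a b l D1 D2 :: real assumes "D1 \<noteq> 0" "D2 \<noteq> 0"
  shows "a * b - 2 * (a * (l / D2 * b)) + l / D1 * a * (l / D2 * b) = a * b * (D1 * D2 - 2 * l * D1 + l^2) / (D1 * D2)"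
  using assms by (simp add: field_simps power2_eq_square)

lemma aX_split: fixes a Y n D :: real assumes "D \<noteq> 0"
  shows "a * (Y + n * D) / D^2 = a * Y / D^2 + a * n / D"
  using assms by (simp add: field_simps power2_eq_square)

lemma aSS_alg: fixes a Y l D1 D2 :: real assumes "D1 \<noteq> 0" "D2 \<noteq> 0" "l \<noteq> 0"
  shows "a * Y * 2 / (D1 * D2) = 2 / l^2 * (l / D2 * (l / D1 * a) * Y)"
  using assms by (simp add: field_simps power2_eq_square)

lemma T_pointwise:
  assumes l: "l \<ge> 1" and nu: "\<nu> > -1"
  defines "c \<equiv> min 1 (\<nu> + 1)"
  defines "M \<equiv> 60 * exp l / sqrt l"
  shows "\<bar>Aterm l m * bterm \<nu> l m - 2 * (Aterm l m * bterm \<nu> l (Suc m)) + Aterm l (Suc m) * bterm \<nu> l (Suc m)\<bar>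
    \<le> M / c * (2 / l^2 * (Aterm l (m + 2) * (real (m + 2) - 1 - l)^2) + \<bar>\<nu>\<bar> / l * Aterm l (Suc m))"
proof -
  define k where "k = real m"
  define a where "a = Aterm l m"
  define b where "b = bterm \<nu> l m"
  have l0: "l > 0" using l by simp
  have k0: "k \<ge> 0" by (simp add: k_def)
  have c0: "c > 0" using nu by (simp add: c_def)
  have a0: "a \<ge> 0" using l0 by (simp add: a_def Aterm_nonneg)
  have b0: "b \<ge> 0" using l0 nu by (simp add: b_def bterm_nonneg)
  have bM: "b \<le> M" unfolding b_def M_def using l nu by (rule bterm_le)
  have kn: "k + \<nu> + 1 > 0" using k0 nu by simp
  have aS: "Aterm l (Suc m) = l / (k + 1) * a" by (simp add: Aterm_Suc a_def k_def)
  have aSS: "Aterm l (m + 2) = l / (k + 2) * (l / (k + 1) * a)"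
    using Aterm_Suc[of l "Suc m"] aS by (simp add: k_def)
  have bS: "bterm \<nu> l (Suc m) = l / (k + \<nu> + 1) * b"
    using bterm_Suc[OF nu l0] by (simp add: b_def k_def)
  define N where "N = (k + 1 - l)^2 + \<nu> * (k + 1)"
  define X where "X = (k + 1 - l)^2 + \<bar>\<nu>\<bar> * (k + 1)"
  define T where "T = Aterm l m * bterm \<nu> l m - 2 * (Aterm l m * bterm \<nu> l (Suc m)) + Aterm l (Suc m) * bterm \<nu> l (Suc m)"
  have T: "T = a * b * N / ((k + 1) * (k + \<nu> + 1))"
  proof -
    have "T = a * b * ((k + 1) * (k + \<nu> + 1) - 2 * l * (k + 1) + l^2) / ((k + 1) * (k + \<nu> + 1))"
      unfolding T_def aS bS a_def[symmetric] b_def[symmetric] using kn k0 by (intro T_alg) auto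
    moreover have "(k + 1) * (k + \<nu> + 1) - 2 * l * (k + 1) + l^2 = N"
      unfolding N_def by (simp add: power2_eq_square algebra_simps)
    ultimately show ?thesis by simp
  qed
  have NX: "\<bar>N\<bar> \<le> X" unfolding N_def X_def using k0
    by (auto simp: abs_mult intro!: order.trans[OF abs_triangle_ineq])
  have X0: "X \<ge> 0" unfolding X_def using k0 by simp
  have D: "(k + 1) * (k + \<nu> + 1) \<ge> c * (k + 1)^2"
  proof -
    have "k + \<nu> + 1 \<ge> c * (k + 1)"
    proof (cases "\<nu> \<ge> 0")
      case True then show ?thesis using k0 by (simp add: c_def)
    next
      case False
      then have "c = \<nu> + 1" by (simp add: c_def)
      moreover have "\<nu> * k \<le> 0" using False k0 by (simp add: mult_nonpos_nonneg)
      ultimately show ?thesis by (simp add: algebra_simps)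
    qed
    then have "(k + 1) * (c * (k + 1)) \<le> (k + 1) * (k + \<nu> + 1)" using k0 by (intro mult_left_mono) auto
    then show ?thesis by (simp add: power2_eq_square mult_ac)
  qed
  have "\<bar>T\<bar> = a * b * \<bar>N\<bar> / ((k + 1) * (k + \<nu> + 1))"
    unfolding T using a0 b0 kn k0 by (simp add: abs_mult abs_divide)
  also have "\<dots> \<le> a * b * X / ((k + 1) * (k + \<nu> + 1))"
    using NX a0 b0 kn k0 by (intro divide_right_mono mult_left_mono) auto
  also have "\<dots> \<le> a * b * X / (c * (k + 1)^2)"
  proof -
    have pp: "0 < (k + 1) * (k + \<nu> + 1) * (c * (k + 1)^2)"
      using c0 k0 kn by (intro mult_pos_pos) auto
    show ?thesis using D a0 b0 X0 pp by (intro divide_left_mono) auto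
  qed
  also have "\<dots> = b / c * (a * X / (k + 1)^2)" by (simp add: field_simps)
  finally have T1: "\<bar>T\<bar> \<le> b / c * (a * X / (k + 1)^2)" .
  define U where "U = 2 / l^2 * (Aterm l (m + 2) * (real (m + 2) - 1 - l)^2) + \<bar>\<nu>\<bar> / l * Aterm l (Suc m)"
  have u1: "0 \<le> 2 / l^2 * (Aterm l (m+2) * (real (m+2) - 1 - l)^2)"
    using Aterm_nonneg[of l "m+2"] l0 by (intro mult_nonneg_nonneg) auto
  have u2: "0 \<le> \<bar>\<nu>\<bar> / l * Aterm l (Suc m)"
    using Aterm_nonneg[of l "Suc m"] l0 by (intro mult_nonneg_nonneg) auto
  have U0: "U \<ge> 0" unfolding U_def using u1 u2 by linarith
  have aX: "a * X / (k + 1)^2 \<le> U"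
  proof -
    have e: "a * X / (k + 1)^2 = a * (k + 1 - l)^2 / (k + 1)^2 + a * \<bar>\<nu>\<bar> / (k + 1)"
      unfolding X_def using k0 aX_split[of "k+1" a "(k + 1 - l)^2" "\<bar>\<nu>\<bar>"] by simp
    have "a * (k + 1 - l)^2 / (k + 1)^2 \<le> a * (k + 1 - l)^2 * 2 / ((k + 1) * (k + 2))"
    proof -
      have "(k + 1) * (k + 2) \<le> 2 * (k + 1)^2" using k0 by (simp add: power2_eq_square algebra_simps)
      moreover have "0 < (k + 1)^2" "0 < (k + 1) * (k + 2)" using k0 by auto
      ultimately have "1 / (k + 1)^2 \<le> 2 / ((k + 1) * (k + 2))"
        using div_le_div_cross[of "(k + 1)^2" "(k + 1) * (k + 2)" 1 2] by simp
      then have "(a * (k + 1 - l)^2) * (1 / (k + 1)^2) \<le> (a * (k + 1 - l)^2) * (2 / ((k + 1) * (k + 2)))"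
        using a0 by (intro mult_left_mono) auto
      then show ?thesis by simp
    qed
    also have "\<dots> = 2 / l^2 * (l / (k + 2) * (l / (k + 1) * a) * (k + 1 - l)^2)"
      by (rule aSS_alg) (use l0 k0 in auto)
    also have "\<dots> = 2 / l^2 * (Aterm l (m + 2) * (real (m + 2) - 1 - l)^2)"
    proof -
      have e: "real (m + 2) - 1 - l = k + 1 - l" by (simp add: k_def)
      show ?thesis unfolding aSS e by (rule refl)
    qed
    finally have 1: "a * (k + 1 - l)^2 / (k + 1)^2 \<le> 2 / l^2 * (Aterm l (m + 2) * (real (m + 2) - 1 - l)^2)" .
    have 2: "a * \<bar>\<nu>\<bar> / (k + 1) = \<bar>\<nu>\<bar> / l * Aterm l (Suc m)"
      unfolding aS using l0 k0 by (simp add: field_simps)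
    show ?thesis unfolding e U_def using 1 2 by linarith
  qed
  have "b / c * (a * X / (k + 1)^2) \<le> M / c * U"
  proof -
    have "b / c * (a * X / (k + 1)^2) \<le> b / c * U"
      using aX b0 c0 by (intro mult_left_mono) auto
    also have "\<dots> \<le> M / c * U" using bM U0 c0 by (intro mult_right_mono divide_right_mono) auto
    finally show ?thesis .
  qed
  then show ?thesis using T1 unfolding T_def U_def by linarith
qed


lemma bessel_diff:
  assumes l: "l \<ge> 1" and nu: "\<nu> > -1"
  shows "\<bar>besselI \<nu> (2 * l) - besselI (\<nu> + 1) (2 * l)\<bar>
    \<le> 30 * ((4 + \<bar>\<nu>\<bar>) / min 1 (\<nu> + 1) + 1) * exp l * exp l / (l * sqrt l)"
proof -
  define c where "c = min 1 (\<nu> + 1)"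
  define M where "M = 60 * exp l / sqrt l"
  define A where "A = Aterm l"
  define b where "b = bterm \<nu> l"
  define P where "P = besselI \<nu> (2 * l)"
  define R where "R = besselI (\<nu> + 1) (2 * l)"
  have l0: "l > 0" using l by simp
  have c0: "c > 0" using nu by (simp add: c_def)
  have M0: "M \<ge> 0" unfolding M_def using l0 by (intro divide_nonneg_nonneg) auto
  have sP: "(\<lambda>m. A m * b m) sums P"
    unfolding A_def b_def P_def by (rule bessel_sums[OF nu l0])
  have sR: "(\<lambda>m. A m * b (Suc m)) sums R"
    using bessel_sums[of "\<nu> + 1" l] nu l0 unfolding A_def b_def R_def bterm_shift by simp
  have sQ: "(\<lambda>m. A (Suc m) * b (Suc m)) sums (P - A 0 * b 0)"
    using sums_Suc_iff[of "\<lambda>m. A m * b m" "P - A 0 * b 0"] sP by simp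
  have sT: "(\<lambda>m. A m * b m - 2 * (A m * b (Suc m)) + A (Suc m) * b (Suc m)) sums (P - 2 * R + (P - A 0 * b 0))"
    by (intro sums_add sums_diff sums_mult sP sR sQ)
  define F where "F i = Aterm l i * (real i - 1 - l)^2" for i
  define V where "V = (l + 1) * exp l - (\<Sum>i<2. F i)"
  have sV: "(\<lambda>i. F (i + 2)) sums V"
    unfolding V_def using sums_iff_shift[of F 2 "(l + 1) * exp l - (\<Sum>i<2. F i)"] poisson_var[of l]
    by (simp add: F_def[abs_def])
  have V_le: "V \<le> (l + 1) * exp l"
  proof -
    have "(\<Sum>i<2. F i) \<ge> 0" unfolding F_def using l0 by (intro sum_nonneg mult_nonneg_nonneg Aterm_nonneg) auto
    then show ?thesis unfolding V_def by simp
  qed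
  define W where "W = exp l - A 0"
  have sW: "(\<lambda>m. A (Suc m)) sums W"
    unfolding W_def A_def using sums_Suc_iff[of "Aterm l" "exp l - Aterm l 0"] exp_sums[of l] by simp
  have W_le: "W \<le> exp l" unfolding W_def A_def using Aterm_nonneg[of l 0] l0 by simp
  define U where "U m = M / c * (2 / l^2 * F (m + 2) + \<bar>\<nu>\<bar> / l * A (Suc m))" for m
  define SU where "SU = M / c * (2 / l^2 * V + \<bar>\<nu>\<bar> / l * W)"
  have sU: "U sums SU" unfolding U_def[abs_def] SU_def
    by (intro sums_mult sums_add sV sW)
  have sU': "(\<lambda>m. - U m) sums (- SU)" by (rule sums_minus[OF sU])
  have Tb: "\<bar>A m * b m - 2 * (A m * b (Suc m)) + A (Suc m) * b (Suc m)\<bar> \<le> U m" for m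
    using T_pointwise[OF l nu, of m] unfolding U_def A_def b_def F_def M_def c_def by simp
  have Tb1: "A m * b m - 2 * (A m * b (Suc m)) + A (Suc m) * b (Suc m) \<le> U m" for m
    using abs_le_D1[OF Tb[of m]] .
  have Tb2: "- U m \<le> A m * b m - 2 * (A m * b (Suc m)) + A (Suc m) * b (Suc m)" for m
    using abs_le_D2[OF Tb[of m]] by linarith
  have up: "P - 2 * R + (P - A 0 * b 0) \<le> SU"
    by (rule sums_le[OF Tb1 sT sU])
  have lo: "- SU \<le> P - 2 * R + (P - A 0 * b 0)"
    by (rule sums_le[OF Tb2 sU' sT])
  have A0: "A 0 = 1" by (simp add: A_def Aterm_def)
  have b0: "0 \<le> b 0" "b 0 \<le> M" unfolding b_def M_def using bterm_nonneg[OF nu l0] bterm_le[OF l nu] by auto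
  have SU_le: "SU \<le> M / c * ((4 + \<bar>\<nu>\<bar>) * exp l / l)"
  proof -
    have "2 / l^2 * V \<le> 2 / l^2 * ((l + 1) * exp l)" using V_le l0 by (intro mult_left_mono) auto
    also have "\<dots> \<le> 4 * exp l / l"
    proof -
      have "2 * (l + 1) \<le> 4 * l" using l by simp
      then have "2 * (l + 1) * exp l * l \<le> 4 * l * exp l * l"
        using l0 by (intro mult_right_mono) auto
      then show ?thesis using l0 by (simp add: field_simps power2_eq_square)
    qed
    finally have 1: "2 / l^2 * V \<le> 4 * exp l / l" .
    have 2: "\<bar>\<nu>\<bar> / l * W \<le> \<bar>\<nu>\<bar> / l * exp l" using W_le l0 by (intro mult_left_mono) auto
    have "2 / l^2 * V + \<bar>\<nu>\<bar> / l * W \<le> (4 + \<bar>\<nu>\<bar>) * exp l / l"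
    proof -
      have "(4 + \<bar>\<nu>\<bar>) * exp l / l = 4 * exp l / l + \<bar>\<nu>\<bar> / l * exp l"
        by (simp add: distrib_right add_divide_distrib)
      then show ?thesis using 1 2 by linarith
    qed
    then show ?thesis unfolding SU_def using c0 M0 by (intro mult_left_mono) auto
  qed
  have h1: "P - R \<le> (SU + M) / 2" using up A0 b0 by simp
  have h2: "R - P \<le> (SU + M) / 2" using lo A0 b0 by simp
  have "\<bar>P - R\<bar> \<le> (SU + M) / 2" by (rule abs_leI) (use h1 h2 in linarith)+
  also have "\<dots> \<le> (M / c * ((4 + \<bar>\<nu>\<bar>) * exp l / l) + M * exp l / l) / 2"
  proof -
    have "l \<le> exp l" using exp_ge_add_one_self[of l] by linarith
    then have "M \<le> M * exp l / l" using l0 M0 by (simp add: field_simps mult_left_mono)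
    then show ?thesis using SU_le by (intro divide_right_mono add_mono) auto
  qed
  also have "\<dots> = 30 * ((4 + \<bar>\<nu>\<bar>) / c + 1) * exp l * exp l / (l * sqrt l)"
    unfolding M_def using l0 c0 by (simp add: field_simps)
  finally show ?thesis unfolding P_def R_def c_def .
qed


lemma gser_nonneg: "a > -1 \<Longrightarrow> u \<ge> 0 \<Longrightarrow> gser a u \<ge> 0"
  unfolding gser_def by (intro suminf_nonneg gser_summable) (auto intro!: mult_nonneg_nonneg less_imp_le[OF gcoef_pos])

lemma besselI_nonneg: assumes "\<mu> > -1" "w > 0" shows "besselI \<mu> w \<ge> 0"
  using besselI_gser[OF assms] gser_nonneg[OF assms(1), of "(w/2)^2"] by simp

lemma gser_le_exp: assumes "a > -1" "u \<ge> 0" shows "gser a u \<le> 2 * exp u"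
proof -
  have s1: "(\<lambda>m. gcoef a m * u ^ m) sums gser a u"
    unfolding gser_def using gser_summable[OF assms(1)] by (simp add: summable_sums)
  have s2: "(\<lambda>m. 2 * Aterm u m) sums (2 * exp u)" by (intro sums_mult exp_sums)
  show ?thesis
  proof (rule sums_le[OF _ s1 s2])
    fix m
    have "gcoef a m * u ^ m \<le> (2 / fact m) * u ^ m"
      using gcoef_le[OF assms(1)] assms(2) by (intro mult_right_mono) auto
    then show "gcoef a m * u ^ m \<le> 2 * Aterm u m" by (simp add: Aterm_def)
  qed
qed

lemma bessel_small: assumes mu: "\<mu> > -1" and l: "0 < l" "l \<le> 1"
  shows "besselI \<mu> (2 * l) \<le> 6 * l powr \<mu>"
proof -
  have "besselI \<mu> (2 * l) = l powr \<mu> * gser \<mu> (l^2)" using besselI_gser[of \<mu> "2*l"] mu l by simp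
  also have "\<dots> \<le> l powr \<mu> * (2 * exp 1)"
  proof -
    have "l^2 \<le> 1" using l by (simp add: power_le_one)
    then have "exp (l^2) \<le> exp 1" by simp
    then have "gser \<mu> (l^2) \<le> 2 * exp 1" using gser_le_exp[OF mu, of "l^2"] zero_le_power2[of l] by linarith
    then show ?thesis by (intro mult_left_mono) auto
  qed
  also have "\<dots> \<le> l powr \<mu> * 6" using exp_le by (intro mult_left_mono) auto
  finally show ?thesis by simp
qed

lemma u_exp_sq: "(u::real) * exp (- (u^2)) \<le> 1"
proof (cases "u \<le> 0")
  case True
  have "u * exp (- (u^2)) \<le> 0" by (rule mult_nonpos_nonneg) (use True in auto)
  then show ?thesis by linarith
next
  case False
  have "(u - 1/2)^2 = u^2 - u + 1/4" by (simp add: power2_eq_square algebra_simps)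
  moreover have "0 \<le> (u - 1/2)^2" by simp
  ultimately have "u \<le> 1 + u^2" by linarith
  also have "\<dots> \<le> exp (u^2)" by simp
  finally have "u \<le> exp (u^2)" .
  then show ?thesis by (simp add: exp_minus field_simps)
qed

lemma v_exp_4a: assumes "a > 0" shows "v * exp (- (v^2) / (4 * a)) \<le> 2 * sqrt a"
proof -
  define u where "u = v / (2 * sqrt a)"
  have sa: "sqrt a > 0" using assms by simp
  have v: "v = 2 * sqrt a * u" using sa by (simp add: u_def)
  have "v^2 / (4 * a) = u^2" unfolding v using assms by (simp add: power_mult_distrib)
  then have "v * exp (- (v^2) / (4 * a)) = 2 * sqrt a * (u * exp (- (u^2)))"
    by (simp add: v mult.assoc)
  also have "\<dots> \<le> 2 * sqrt a * 1" using u_exp_sq[of u] sa by (intro mult_left_mono) auto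
  finally show ?thesis by simp
qed

lemma v_exp_8a: assumes "a > 0" shows "v * exp (- (v^2) / (8 * a)) \<le> 3 * sqrt a"
proof -
  have "v * exp (- (v^2) / (4 * (2 * a))) \<le> 2 * sqrt (2 * a)" using v_exp_4a[of "2*a" v] assms by simp
  moreover have "2 * sqrt (2 * a) \<le> 3 * sqrt a"
  proof -
    have "sqrt 2 \<le> 3/2" by (rule real_le_lsqrt) (auto simp: power2_eq_square)
    then show ?thesis using assms by (simp add: real_sqrt_mult)
  qed
  ultimately show ?thesis by simp
qed

lemma exp_rho_bound: assumes "0 < \<rho>" "\<rho> \<le> 1"
  shows "exp (- ((1 - \<rho>)^2 / (2 * \<rho>))) \<le> 2 * sqrt \<rho>"
proof (cases "\<rho> \<ge> 1/4")
  case True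
  have "sqrt (1/4) \<le> sqrt \<rho>" using True by simp
  then have "1/2 \<le> sqrt \<rho>" by (simp add: real_sqrt_divide)
  moreover have "exp (- ((1 - \<rho>)^2 / (2 * \<rho>))) \<le> 1" using assms by simp
  ultimately show ?thesis by linarith
next
  case False
  define v where "v = (1 - \<rho>)^2 / (2 * \<rho>)"
  have v0: "v \<ge> 0" using assms by (simp add: v_def)
  have "exp (- v) * (1 + v) \<le> 1"
    using exp_ge_add_one_self[of v] v0 by (simp add: exp_minus field_simps)
  then have e: "exp (- v) \<le> 1 / (1 + v)" using v0 by (simp add: field_simps)
  have h: "9/16 \<le> (1 - \<rho>)^2"
  proof -
    have "3/4 \<le> 1 - \<rho>" using False by simp
    then have "(3/4)^2 \<le> (1 - \<rho>)^2" by (intro power_mono) auto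
    then show ?thesis by (simp add: power2_eq_square)
  qed
  have "(9/16) / (2 * \<rho>) \<le> (1 - \<rho>)^2 / (2 * \<rho>)" using h assms by (intro divide_right_mono) auto
  then have "v \<ge> (9/16) / (2 * \<rho>)" unfolding v_def .
  then have "1 + v \<ge> 9 / (32 * \<rho>)" using v0 by (simp add: field_simps)
  then have "1 / (1 + v) \<le> 1 / (9 / (32 * \<rho>))"
    using assms v0 by (intro divide_left_mono) (auto intro!: mult_pos_pos)
  then have "1 / (1 + v) \<le> 32 * \<rho> / 9" by simp
  also have "\<dots> \<le> 2 * sqrt \<rho>"
  proof -
    have "sqrt \<rho> \<le> sqrt (1/4)" using False by (intro real_sqrt_le_mono) auto
    moreover have "sqrt (1/4::real) = 1/2" by (simp add: real_sqrt_divide)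
    ultimately have "sqrt \<rho> \<le> 1/2" by simp
    have "\<rho> = sqrt \<rho> * sqrt \<rho>" using assms by simp
    then have "32 * \<rho> / 9 = 32 * sqrt \<rho> * sqrt \<rho> / 9" by simp
    also have "\<dots> \<le> 32 * sqrt \<rho> * (1/2) / 9"
      using \<open>sqrt \<rho> \<le> 1/2\<close> assms by (intro divide_right_mono mult_left_mono) auto
    also have "\<dots> \<le> 2 * sqrt \<rho>" using assms by simp
    finally show ?thesis .
  qed
  finally show ?thesis using e unfolding v_def by simp
qed

lemma powr_le_one_plus: assumes "(a::real) \<ge> 0" "0 \<le> g" "g \<le> 1" shows "a powr g \<le> 1 + a"
proof (cases "a \<le> 1")
  case True
  then have "a powr g \<le> 1" using assms by (intro powr_le1) auto
  then show ?thesis using assms by simp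
next
  case False
  then have "a powr g \<le> a powr 1" using assms by (intro powr_mono) auto
  then show ?thesis using False by simp
qed


lemma gauss_split:
  fixes x y k d :: real
  assumes d: "d > 0" and k: "k \<ge> 1"
  shows "exp (- (1/2) * (k / d) * (x^2 + y^2)) \<le> exp (- ((x - y)^2) / (8 * d)) * exp (- (x^2) / (4 * d))"
proof -
  have e: "4 * (x^2 + y^2) - ((x - y)^2 + 2 * x^2) = (x + y)^2 + 2 * y^2"
    by (simp add: power2_eq_square algebra_simps)
  have "0 \<le> (x + y)^2 + 2 * y^2" by simp
  then have h1: "(x - y)^2 + 2 * x^2 \<le> 4 * (x^2 + y^2)" using e by linarith
  have h2: "4 * (x^2 + y^2) \<le> 4 * (k * (x^2 + y^2))" using k by (intro mult_left_mono) (auto intro: mult_right_mono[of 1 k, simplified])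
  have h: "(x - y)^2 / 8 + x^2 / 4 \<le> k * (x^2 + y^2) / 2" using h1 h2 by linarith
  have "- (1/2) * (k / d) * (x^2 + y^2) = - (k * (x^2 + y^2) / 2) / d" by (simp add: field_simps)
  also have "\<dots> \<le> - ((x - y)^2 / 8 + x^2 / 4) / d" using h d by (intro divide_right_mono) auto
  also have "\<dots> = - ((x - y)^2) / (8 * d) + - (x^2) / (4 * d)" using d by (simp add: field_simps)
  finally show ?thesis by (simp add: exp_add[symmetric])
qed

lemma gauss_split_y:
  fixes x y k d :: real
  assumes d: "d > 0" and k: "k \<ge> 1"
  shows "exp (- (1/2) * (k / d) * (x^2 + y^2)) \<le> exp (- ((x - y)^2) / (8 * d)) * exp (- (y^2) / (4 * d))"
  using gauss_split[OF d k, of y x] by (simp add: add.commute power2_commute)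

lemma caseA:
  assumes nu: "\<nu> > -1" and rho: "0 < \<rho>" "\<rho> < 1" and d: "d = 1 - \<rho>^2"
    and x: "x > 0" and y: "y > 0" and l: "l = \<rho> * x * y / d" "l \<le> 1"
  shows "(2 / d) * (2 * \<rho> * sqrt (x * y) / d) * exp (- (1/2) * ((1 + \<rho>^2) / d) * (x^2 + y^2))
      * \<bar>x * besselI (\<nu> + 1) (2 * l) - \<rho> * y * besselI \<nu> (2 * l)\<bar>
    \<le> 120 * sqrt \<rho> / d * exp (- ((x - y)^2) / (8 * d)) * (1 + sqrt d / x) powr gamma_exp \<nu>"
proof -
  define s where "s = sqrt \<rho>"
  define q where "q = sqrt d"
  have d0: "d > 0" using rho d by (simp add: power_less_one_iff abs_less_iff)
  have s0: "s > 0" using rho by (simp add: s_def)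
  have q0: "q > 0" using d0 by (simp add: q_def)
  have rs: "\<rho> = s^2" using rho by (simp add: s_def)
  have dq: "d = q^2" using d0 by (simp add: q_def)
  have l0: "l > 0" using l rho x y d0 by simp
  define Ex where "Ex = exp (- (1/2) * ((1 + \<rho>^2) / d) * (x^2 + y^2))"
  define G where "G = exp (- ((x - y)^2) / (8 * d))"
  define g where "g = gamma_exp \<nu>"
  define Gam where "Gam = (1 + sqrt d / x) powr g"
  have g0: "g \<ge> 0" by (simp add: g_def gamma_exp_def)
  have Gam1: "Gam \<ge> 1"
  proof -
    have "1 powr g \<le> (1 + sqrt d / x) powr g" using g0 x d0 by (intro powr_mono2) auto
    then show ?thesis by (simp add: Gam_def)
  qed
  have G0: "G \<ge> 0" by (simp add: G_def)
  have Ex0: "Ex \<ge> 0" by (simp add: Ex_def)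
  have k1: "1 + \<rho>^2 \<ge> 1" by simp
  have ExX: "x * Ex \<le> 2 * q * G"
  proof -
    have "x * Ex \<le> x * (G * exp (- (x^2) / (4 * d)))"
      using gauss_split[OF d0 k1, of x y] x unfolding Ex_def G_def by (intro mult_left_mono) auto
    also have "\<dots> = G * (x * exp (- (x^2) / (4 * d)))" by simp
    also have "\<dots> \<le> G * (2 * q)" unfolding q_def using v_exp_4a[OF d0, of x] G0 by (intro mult_left_mono) auto
    finally show ?thesis by (simp only: mult_ac)
  qed
  have ExY: "y * Ex \<le> 2 * q * G"
  proof -
    have "y * Ex \<le> y * (G * exp (- (y^2) / (4 * d)))"
      using gauss_split_y[OF d0 k1, of x y] y unfolding Ex_def G_def by (intro mult_left_mono) auto
    also have "\<dots> = G * (y * exp (- (y^2) / (4 * d)))" by simp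
    also have "\<dots> \<le> G * (2 * q)" unfolding q_def using v_exp_4a[OF d0, of y] G0 by (intro mult_left_mono) auto
    finally show ?thesis by (simp only: mult_ac)
  qed
  have ExG: "Ex \<le> G"
  proof -
    have "Ex \<le> G * exp (- (y^2) / (4 * d))"
      using gauss_split_y[OF d0 k1, of x y] unfolding Ex_def G_def .
    also have "\<dots> \<le> G * 1" using G0 d0 by (intro mult_left_mono) auto
    finally show ?thesis by simp
  qed
  have sxy: "sqrt (x * y) = q * sqrt l / s"
  proof -
    have "x * y = d * l / \<rho>" using l rho d0 by (simp add: field_simps)
    then show ?thesis using rho d0 l0 by (simp add: q_def s_def real_sqrt_divide real_sqrt_mult)
  qed
  have Pre: "(2 / d) * (2 * \<rho> * sqrt (x * y) / d) * Ex = 4 * s * sqrt l * Ex / q^3"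
    unfolding sxy rs dq using s0 q0 by (simp add: field_simps power2_eq_square power3_eq_cube)
  define B1 where "B1 = besselI (\<nu> + 1) (2 * l)"
  define B0 where "B0 = besselI \<nu> (2 * l)"
  have B10: "B1 \<ge> 0" unfolding B1_def using nu l0 by (intro besselI_nonneg) auto
  have B00: "B0 \<ge> 0" unfolding B0_def using nu l0 by (intro besselI_nonneg) auto
  have sl: "sqrt l = l powr (1/2)" using l0 by (simp add: powr_half_sqrt)
  have T1: "sqrt l * B1 \<le> 6"
  proof -
    have "sqrt l * B1 \<le> sqrt l * (6 * l powr (\<nu> + 1))"
      unfolding B1_def using bessel_small[of "\<nu>+1" l] nu l l0 by (intro mult_left_mono) auto
    also have "\<dots> = 6 * l powr (\<nu> + 3/2)" unfolding sl by (simp add: powr_add[symmetric] add_ac)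
    also have "\<dots> \<le> 6 * 1" using nu l l0 by (intro mult_left_mono powr_le1) auto
    finally show ?thesis by simp
  qed
  have term1: "4 * s * sqrt l * Ex / q^3 * (x * B1) \<le> 48 * s * G / q^2"
  proof -
    have "4 * s * sqrt l * Ex / q^3 * (x * B1) = 4 * s / q^3 * (x * Ex) * (sqrt l * B1)" by (simp add: field_simps)
    also have "\<dots> \<le> 4 * s / q^3 * (2 * q * G) * 6"
    proof (rule mult_mono[OF _ T1])
      show "4 * s / q^3 * (x * Ex) \<le> 4 * s / q^3 * (2 * q * G)" using ExX s0 q0 by (intro mult_left_mono) auto
      show "0 \<le> 4 * s / q^3 * (2 * q * G)" using s0 q0 G0 by simp
      show "0 \<le> sqrt l * B1" using l0 B10 by simp
    qed
    also have "\<dots> = 48 * s * G / q^2" using q0 by (simp add: field_simps power2_eq_square power3_eq_cube)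
    finally show ?thesis .
  qed
  have term2: "4 * s * sqrt l * Ex / q^3 * (\<rho> * y * B0) \<le> 72 * s * G * Gam / q^2"
  proof (cases "\<nu> \<ge> -1/2")
    case True
    have T0: "sqrt l * B0 \<le> 6"
    proof -
      have "sqrt l * B0 \<le> sqrt l * (6 * l powr \<nu>)"
        unfolding B0_def using bessel_small[of \<nu> l] nu l l0 by (intro mult_left_mono) auto
      also have "\<dots> = 6 * l powr (\<nu> + 1/2)" unfolding sl by (simp add: powr_add[symmetric] add_ac)
      also have "\<dots> \<le> 6 * 1" using True l l0 by (intro mult_left_mono powr_le1) auto
      finally show ?thesis by simp
    qed
    have "4 * s * sqrt l * Ex / q^3 * (\<rho> * y * B0) = 4 * s * \<rho> / q^3 * (y * Ex) * (sqrt l * B0)"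
      by (simp add: field_simps)
    also have "\<dots> \<le> 4 * s * \<rho> / q^3 * (2 * q * G) * 6"
    proof (rule mult_mono[OF _ T0])
      show "4 * s * \<rho> / q^3 * (y * Ex) \<le> 4 * s * \<rho> / q^3 * (2 * q * G)" using ExY s0 q0 rho by (intro mult_left_mono) auto
      show "0 \<le> 4 * s * \<rho> / q^3 * (2 * q * G)" using s0 q0 G0 rho by simp
      show "0 \<le> sqrt l * B0" using l0 B00 by simp
    qed
    also have "\<dots> = 48 * \<rho> * (s * G / q^2)" using q0 by (simp add: field_simps power2_eq_square power3_eq_cube)
    also have "\<dots> \<le> 72 * 1 * (s * G / q^2)" using rho s0 G0 q0 by (intro mult_right_mono) auto
    also have "\<dots> \<le> 72 * s * G * Gam / q^2" using Gam1 s0 G0 q0 by (simp add: field_simps mult_left_mono)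
    finally show ?thesis .
  next
    case False
    then have gdef: "g = - 1/2 - \<nu>" using nu by (simp add: g_def gamma_exp_def)
    have gl: "g \<le> 1/2" "g > 0" using gdef nu False by auto
    have il: "1 / l = (q / x) * (q / y) * (1 / \<rho>)"
    proof -
      have "l * (q * q) = \<rho> * (x * y)" using l(1) dq q0 by (simp add: field_simps power2_eq_square)
      then show ?thesis using l0 rho x y q0 by (simp add: field_simps)
    qed
    have e: "\<nu> + 1/2 = - g" by (simp add: gdef)
    have "l powr (\<nu> + 1/2) = (1 / l) powr g" unfolding e by (simp add: powr_minus_divide powr_divide)
    also have "\<dots> = (q / x) powr g * (q / y) powr g * (1 / \<rho>) powr g" unfolding il powr_mult by (rule refl)
    also have "\<dots> \<le> Gam * (1 + q / y) * (1 / s)"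
    proof (intro mult_mono)
      show "(q / x) powr g \<le> Gam" unfolding Gam_def q_def using g0 x d0 by (intro powr_mono2) auto
      show "(q / y) powr g \<le> 1 + q / y" using gl q0 y by (intro powr_le_one_plus) auto
      have "(1 / \<rho>) powr g \<le> (1 / \<rho>) powr (1/2)" using gl rho by (intro powr_mono) auto
      also have "\<dots> = 1 / s" using rho by (simp add: powr_half_sqrt s_def real_sqrt_divide)
      finally show "(1 / \<rho>) powr g \<le> 1 / s" .
    qed (use Gam1 q0 y in auto)
    finally have lp: "l powr (\<nu> + 1/2) \<le> Gam * (1 + q / y) * (1 / s)" .
    have T0: "sqrt l * B0 \<le> 6 * (Gam * (1 + q / y) * (1 / s))"
    proof -
      have "sqrt l * B0 \<le> sqrt l * (6 * l powr \<nu>)"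
        unfolding B0_def using bessel_small[of \<nu> l] nu l l0 by (intro mult_left_mono) auto
      also have "\<dots> = 6 * l powr (\<nu> + 1/2)" unfolding sl by (simp add: powr_add[symmetric] add_ac)
      also have "\<dots> \<le> 6 * (Gam * (1 + q / y) * (1 / s))" using lp by simp
      finally show ?thesis .
    qed
    have yq: "(y + q) * Ex \<le> 3 * q * G"
    proof -
      have "q * Ex \<le> q * G" using ExG q0 by (intro mult_left_mono) auto
      moreover have "(y + q) * Ex = y * Ex + q * Ex" by (simp add: algebra_simps)
      ultimately show ?thesis using ExY by linarith
    qed
    have "4 * s * sqrt l * Ex / q^3 * (\<rho> * y * B0) = 4 * s * \<rho> * y * Ex / q^3 * (sqrt l * B0)"
      by (simp add: field_simps)
    also have "\<dots> \<le> 4 * s * \<rho> * y * Ex / q^3 * (6 * (Gam * (1 + q / y) * (1 / s)))"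
      using T0 s0 rho y Ex0 q0 by (intro mult_left_mono) auto
    also have "\<dots> = 24 * \<rho> * Gam / q^3 * ((y + q) * Ex)" using s0 y q0 by (simp add: field_simps)
    also have "\<dots> \<le> 24 * \<rho> * Gam / q^3 * (3 * q * G)"
      using yq rho Gam1 q0 by (intro mult_left_mono) auto
    also have "\<dots> = 72 * \<rho> * G * Gam / q^2" using q0 by (simp add: field_simps power2_eq_square power3_eq_cube)
    also have "\<dots> \<le> 72 * s * G * Gam / q^2"
    proof -
      have "\<rho> \<le> s" unfolding rs using s0 rho rs by (simp add: power2_eq_square) (smt (verit) mult_le_cancel_left1 s0)
      then show ?thesis using G0 Gam1 q0 by (simp add: divide_right_mono mult_right_mono)
    qed
    finally show ?thesis .
  qed
  have "\<bar>x * B1 - \<rho> * y * B0\<bar> \<le> x * B1 + \<rho> * y * B0"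
    using x y rho B10 B00 by (simp add: abs_le_iff)
  then have "4 * s * sqrt l * Ex / q^3 * \<bar>x * B1 - \<rho> * y * B0\<bar> \<le> 4 * s * sqrt l * Ex / q^3 * (x * B1 + \<rho> * y * B0)"
    using s0 q0 Ex0 l0 by (intro mult_left_mono) auto
  also have "\<dots> \<le> 48 * s * G / q^2 + 72 * s * G * Gam / q^2" using term1 term2 by (simp add: distrib_left)
  also have "\<dots> \<le> 120 * s * G * Gam / q^2"
  proof -
    have "48 * s * G / q^2 \<le> 48 * s * G * Gam / q^2" using Gam1 s0 G0 q0 by (simp add: field_simps mult_left_mono)
    moreover have "48 * s * G * Gam / q^2 + 72 * s * G * Gam / q^2 = 120 * s * G * Gam / q^2"
      by (simp only: add_divide_distrib[symmetric]) (simp add: algebra_simps)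
    ultimately show ?thesis using add_right_mono[of "48 * s * G / q^2" "48 * s * G * Gam / q^2" "72 * s * G * Gam / q^2"]
      by (simp add: ac_simps)
  qed
  finally have main: "4 * s * sqrt l * Ex / q^3 * \<bar>x * B1 - \<rho> * y * B0\<bar> \<le> 120 * s * G * Gam / q^2" .
  show ?thesis using main unfolding Pre[symmetric] Ex_def[symmetric] B1_def[symmetric] B0_def[symmetric]
    unfolding s_def[symmetric] G_def[symmetric] Gam_def[symmetric] g_def[symmetric] dq[symmetric]
    by (simp add: mult_ac)
qed


lemma H_bound:
  fixes x y \<rho> d :: real
  assumes d: "d > 0" and rho: "0 \<le> \<rho>" and x: "x \<ge> 0" and y: "y \<ge> 0"
  shows "exp (- (1/2) * ((1 + \<rho>^2) / d) * (x^2 + y^2)) * (exp (\<rho> * x * y / d) * exp (\<rho> * x * y / d))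
    \<le> exp (- ((x - y)^2) / (8 * d)) * exp (- ((x - y)^2) / (8 * d)) * exp (- ((1 - \<rho>)^2 * (x^2 + y^2)) / (4 * d))"
proof -
  define A where "A = - 2 * (1 + \<rho>^2) * (x^2 + y^2) + 8 * \<rho> * x * y"
  define B where "B = - ((x - y)^2) - (1 - \<rho>)^2 * (x^2 + y^2)"
  have id: "B - A = (\<rho>^2 + 2 * \<rho>) * (x - y)^2 + 2 * (1 - \<rho>)^2 * (x * y)"
    unfolding A_def B_def by (simp add: power2_eq_square algebra_simps)
  have nn: "0 \<le> (\<rho>^2 + 2 * \<rho>) * (x - y)^2 + 2 * (1 - \<rho>)^2 * (x * y)"
    using rho x y by (intro add_nonneg_nonneg mult_nonneg_nonneg) auto
  have AB: "A / (4 * d) \<le> B / (4 * d)" using id nn d by (intro divide_right_mono) auto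
  have lhs: "exp (- (1/2) * ((1 + \<rho>^2) / d) * (x^2 + y^2)) * (exp (\<rho> * x * y / d) * exp (\<rho> * x * y / d)) = exp (A / (4 * d))"
    unfolding A_def using d by (simp add: exp_add[symmetric] field_simps)
  have rhs: "exp (- ((x - y)^2) / (8 * d)) * exp (- ((x - y)^2) / (8 * d)) * exp (- ((1 - \<rho>)^2 * (x^2 + y^2)) / (4 * d)) = exp (B / (4 * d))"
    unfolding B_def using d by (simp add: exp_add[symmetric] field_simps)
  show ?thesis unfolding lhs rhs using AB by simp
qed


definition Kd :: "real \<Rightarrow> real" where "Kd \<nu> = 30 * ((4 + \<bar>\<nu>\<bar>) / min 1 (\<nu> + 1) + 1)"

lemma Kd_pos: assumes "\<nu> > -1" shows "Kd \<nu> > 0"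
proof -
  have "min 1 (\<nu> + 1) > 0" using assms by simp
  then have h: "(4 + \<bar>\<nu>\<bar>) / min 1 (\<nu> + 1) \<ge> 0" by simp
  have "30 * ((4 + \<bar>\<nu>\<bar>) / min 1 (\<nu> + 1) + 1) > 0" by (intro mult_pos_pos add_nonneg_pos h) auto
  then show ?thesis unfolding Kd_def .
qed

lemma caseB:
  assumes nu: "\<nu> > -1" and rho: "0 < \<rho>" "\<rho> < 1" and d: "d = 1 - \<rho>^2"
    and x: "x > 0" and y: "y > 0" and l: "l = \<rho> * x * y / d" "l \<ge> 1"
  shows "(2 / d) * (2 * \<rho> * sqrt (x * y) / d) * exp (- (1/2) * ((1 + \<rho>^2) / d) * (x^2 + y^2))
      * \<bar>x * besselI (\<nu> + 1) (2 * l) - \<rho> * y * besselI \<nu> (2 * l)\<bar>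
    \<le> (1200 + 24 * Kd \<nu>) * sqrt \<rho> / d * exp (- ((x - y)^2) / (8 * d)) * (1 + sqrt d / x) powr gamma_exp \<nu>"
proof -
  define s where "s = sqrt \<rho>"
  define q where "q = sqrt d"
  have d0: "d > 0" using rho d by (simp add: power_less_one_iff abs_less_iff)
  have s0: "s > 0" using rho by (simp add: s_def)
  have q0: "q > 0" using d0 by (simp add: q_def)
  have rs: "\<rho> = s^2" using rho by (simp add: s_def)
  have dq: "d = q^2" using d0 by (simp add: q_def)
  have l0: "l > 0" using l by simp
  define Ex where "Ex = exp (- (1/2) * ((1 + \<rho>^2) / d) * (x^2 + y^2))"
  define G where "G = exp (- ((x - y)^2) / (8 * d))"
  define Hx where "Hx = exp (- ((1 - \<rho>)^2 * (x^2 + y^2)) / (4 * d))"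
  define E2 where "E2 = exp l * exp l"
  define H where "H = Ex * E2"
  define g where "g = gamma_exp \<nu>"
  define Gam where "Gam = (1 + sqrt d / x) powr g"
  define K where "K = Kd \<nu>"
  have K0: "K > 0" unfolding K_def using Kd_pos[OF nu] .
  have g0: "g \<ge> 0" by (simp add: g_def gamma_exp_def)
  have Gam1: "Gam \<ge> 1"
  proof -
    have "1 powr g \<le> (1 + sqrt d / x) powr g" using g0 x d0 by (intro powr_mono2) auto
    then show ?thesis by (simp add: Gam_def)
  qed
  have G0: "G \<ge> 0" "G \<le> 1" using d0 by (auto simp: G_def)
  have Hx0: "Hx \<ge> 0" "Hx \<le> 1" using d0 by (auto simp: Hx_def)
  have Ex0: "Ex \<ge> 0" by (simp add: Ex_def)
  have E20: "E2 > 0" by (simp add: E2_def)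
  have H0: "H \<ge> 0" using Ex0 E20 by (simp add: H_def)
  have Hb: "H \<le> G * G * Hx"
    unfolding H_def Ex_def E2_def G_def Hx_def l(1) using H_bound[OF d0, of \<rho> x y] rho x y by simp
  have HG: "H \<le> G * Hx"
  proof -
    have "G * G * Hx \<le> G * 1 * Hx" using G0 Hx0 by (intro mult_right_mono mult_left_mono) auto
    then show ?thesis using Hb by simp
  qed
  have HGG: "H \<le> G * G"
  proof -
    have "G * G * Hx \<le> G * G * 1" using G0 Hx0 by (intro mult_left_mono) auto
    then show ?thesis using Hb by simp
  qed
  have sxy: "sqrt (x * y) = q * sqrt l / s"
  proof -
    have "x * y = d * l / \<rho>" using l rho d0 by (simp add: field_simps)
    then show ?thesis using rho d0 l0 by (simp add: q_def s_def real_sqrt_divide real_sqrt_mult)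
  qed
  have Pre: "(2 / d) * (2 * \<rho> * sqrt (x * y) / d) * Ex = 4 * s * sqrt l * Ex / q^3"
    unfolding sxy rs dq using s0 q0 by (simp add: field_simps power2_eq_square power3_eq_cube)
  define B1 where "B1 = besselI (\<nu> + 1) (2 * l)"
  define B0 where "B0 = besselI \<nu> (2 * l)"
  have B00: "B0 \<ge> 0" unfolding B0_def using nu l0 by (intro besselI_nonneg) auto
  have sl0: "sqrt l > 0" using l0 by simp
  have B0b: "B0 \<le> 60 * E2 / sqrt l"
    unfolding B0_def E2_def using bessel_large[OF l(2) nu] by simp
  have B1b: "\<bar>B1 - B0\<bar> \<le> K * E2 / (l * sqrt l)"
    unfolding B0_def B1_def E2_def K_def Kd_def using bessel_diff[OF l(2) nu]
    by (simp add: abs_minus_commute mult.assoc)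
  have xyG: "\<bar>x - y\<bar> * G \<le> 3 * q"
    using v_exp_8a[OF d0, of "\<bar>x - y\<bar>"] unfolding G_def q_def by simp
  have a: "\<bar>x - y\<bar> * H \<le> 3 * q * G"
  proof -
    have "\<bar>x - y\<bar> * H \<le> \<bar>x - y\<bar> * (G * G)" using HGG by (intro mult_left_mono) auto
    also have "\<dots> = (\<bar>x - y\<bar> * G) * G" by simp
    also have "\<dots> \<le> (3 * q) * G" using xyG G0 by (intro mult_right_mono) auto
    finally show ?thesis .
  qed
  have b: "(1 - \<rho>) * y * H \<le> 2 * q * G"
  proof -
    define v where "v = (1 - \<rho>) * y"
    have v0: "v \<ge> 0" using rho y by (simp add: v_def)
    have "v^2 \<le> (1 - \<rho>)^2 * (x^2 + y^2)" unfolding v_def using x by (simp add: power_mult_distrib mult_left_mono)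
    then have "Hx \<le> exp (- (v^2) / (4 * d))" unfolding Hx_def using d0 by (simp add: divide_right_mono)
    then have "v * Hx \<le> v * exp (- (v^2) / (4 * d))" using v0 by (intro mult_left_mono) auto
    also have "\<dots> \<le> 2 * q" unfolding q_def by (rule v_exp_4a[OF d0])
    finally have vH: "v * Hx \<le> 2 * q" .
    have "(1 - \<rho>) * y * H \<le> v * (G * Hx)" unfolding v_def using HG v0 v_def by (intro mult_left_mono) auto
    also have "\<dots> = (v * Hx) * G" by simp
    also have "\<dots> \<le> (2 * q) * G" using vH G0 by (intro mult_right_mono) auto
    finally show ?thesis .
  qed
  have c: "x / l * H \<le> 6 * q * G"
  proof (cases "x \<le> 2 * y")
    case True
    have xy: "x * y = q^2 * l / s^2" using l rho d0 dq rs by (simp add: field_simps)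
    have "y^2 \<ge> q^2 / (2 * s^2)"
    proof -
      have "x * y \<le> 2 * y * y" using True y by (intro mult_right_mono) auto
      then have h2: "s^2 * (x * y) \<le> s^2 * (2 * y * y)" by (intro mult_left_mono) auto
      have "q^2 / s^2 \<le> x * y" unfolding xy using l(2) q0 s0 by (simp add: field_simps)
      then have h1: "q^2 \<le> s^2 * (x * y)" using s0 by (simp add: field_simps)
      have "q^2 \<le> (2 * s^2) * y^2" using h1 h2 by (simp add: power2_eq_square mult_ac)
      then show ?thesis using s0 by (simp add: divide_le_eq mult.commute)
    qed
    then have "sqrt (q^2 / (2 * s^2)) \<le> y" using y by (simp add: real_le_lsqrt real_sqrt_le_iff)
    moreover have "sqrt (q^2 / (2 * s^2)) = q / (sqrt 2 * s)" using q0 s0 by (simp add: real_sqrt_divide real_sqrt_mult)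
    ultimately have yl: "q / (sqrt 2 * s) \<le> y" by simp
    have "x / l = d / (\<rho> * y)" unfolding l(1) using x y rho d0 by (simp add: field_simps)
    then have xl: "x / l = q^2 / (s^2 * y)" using dq rs by simp
    have "x / l \<le> q^2 / (s^2 * (q / (sqrt 2 * s)))"
      unfolding xl using yl q0 s0 y by (intro divide_left_mono mult_left_mono mult_pos_pos) auto
    also have "\<dots> = sqrt 2 * q / s" using q0 s0 by (simp add: field_simps power2_eq_square)
    finally have xl2: "x / l \<le> sqrt 2 * q / s" .
    have Hxs: "Hx \<le> 2 * s"
    proof -
      have "(1 - \<rho>)^2 / (2 * \<rho>) \<le> (1 - \<rho>)^2 * (x^2 + y^2) / (4 * d)"
      proof -
        have S: "x^2 + y^2 \<ge> 2 * (x * y)" using sum_squares_bound[of x y] by (simp add: power2_eq_square)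
        have dl: "d * l = \<rho> * (x * y)" unfolding l(1) using d0 by simp
        have "d * 1 \<le> d * l" using l(2) d0 by (intro mult_left_mono) auto
        then have "d \<le> \<rho> * (x * y)" using dl by simp
        then have "x * y \<ge> d / \<rho>" using rho by (simp add: divide_le_eq mult.commute)
        then have "x^2 + y^2 \<ge> 2 * d / \<rho>" using S by simp
        then have "(1 - \<rho>)^2 * (2 * d / \<rho>) \<le> (1 - \<rho>)^2 * (x^2 + y^2)" by (intro mult_left_mono) auto
        then have "(1 - \<rho>)^2 * (2 * d / \<rho>) / (4 * d) \<le> (1 - \<rho>)^2 * (x^2 + y^2) / (4 * d)"
          using d0 by (intro divide_right_mono) auto
        moreover have "(1 - \<rho>)^2 * (2 * d / \<rho>) / (4 * d) = (1 - \<rho>)^2 / (2 * \<rho>)" using d0 rho by (simp add: field_simps)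
        ultimately show ?thesis by simp
      qed
      then have "Hx \<le> exp (- ((1 - \<rho>)^2 / (2 * \<rho>)))" unfolding Hx_def by simp
      also have "\<dots> \<le> 2 * sqrt \<rho>" using rho by (intro exp_rho_bound) auto
      finally show ?thesis by (simp add: s_def)
    qed
    have "x / l * H \<le> (sqrt 2 * q / s) * (G * Hx)"
      using xl2 HG H0 x l0 q0 s0 by (intro mult_mono) auto
    also have "\<dots> \<le> (sqrt 2 * q / s) * (G * (2 * s))"
      using Hxs G0 q0 s0 by (intro mult_left_mono) auto
    also have "\<dots> = 2 * sqrt 2 * q * G" using s0 by (simp add: field_simps)
    also have "\<dots> \<le> 6 * q * G"
    proof -
      have "sqrt 2 \<le> 3/2" by (rule real_le_lsqrt) (auto simp: power2_eq_square)
      then show ?thesis using q0 G0 by (simp add: mult_right_mono)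
    qed
    finally show ?thesis .
  next
    case False
    have "x / l \<le> x" using l0 l(2) x by (simp add: divide_le_eq mult_le_cancel_left1)
    also have "x \<le> 2 * \<bar>x - y\<bar>" using False y by simp
    finally have "x / l \<le> 2 * \<bar>x - y\<bar>" .
    then have "x / l * H \<le> 2 * \<bar>x - y\<bar> * H" using H0 by (intro mult_right_mono) auto
    also have "\<dots> \<le> 2 * (3 * q * G)" using a by (simp only: mult.assoc mult_le_cancel_left_pos[of 2])
    finally show ?thesis by simp
  qed
  have dec: "x * B1 - \<rho> * y * B0 = x * (B1 - B0) + (x - y) * B0 + (1 - \<rho>) * y * B0" by (simp add: algebra_simps)
  have tri: "\<bar>x * B1 - \<rho> * y * B0\<bar> \<le> x * \<bar>B1 - B0\<bar> + \<bar>x - y\<bar> * B0 + (1 - \<rho>) * y * B0"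
  proof -
    have "\<bar>x * (B1 - B0) + (x - y) * B0 + (1 - \<rho>) * y * B0\<bar>
        \<le> \<bar>x * (B1 - B0)\<bar> + \<bar>(x - y) * B0\<bar> + \<bar>(1 - \<rho>) * y * B0\<bar>"
      by (rule order.trans[OF abs_triangle_ineq add_right_mono[OF abs_triangle_ineq]])
    moreover have "\<bar>x * (B1 - B0)\<bar> = x * \<bar>B1 - B0\<bar>" using x by (simp add: abs_mult)
    moreover have "\<bar>(x - y) * B0\<bar> = \<bar>x - y\<bar> * B0" using B00 by (simp add: abs_mult)
    moreover have "\<bar>(1 - \<rho>) * y * B0\<bar> = (1 - \<rho>) * y * B0" using B00 rho y by (simp add: abs_mult)
    ultimately show ?thesis unfolding dec by simp
  qed
  define P where "P = 4 * s * sqrt l * Ex / q^3"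
  have P0: "P \<ge> 0" unfolding P_def using s0 sl0 Ex0 q0 by simp
  have t1: "P * (x * \<bar>B1 - B0\<bar>) \<le> 4 * K * s / q^3 * (x / l * H)"
  proof -
    have "P * (x * \<bar>B1 - B0\<bar>) \<le> P * (x * (K * E2 / (l * sqrt l)))"
      using B1b P0 x by (intro mult_left_mono) auto
    also have "\<dots> = 4 * K * s / q^3 * (x / l * H)" unfolding P_def H_def using sl0 l0 q0
      by (simp add: field_simps)
    finally show ?thesis .
  qed
  have t2: "P * (\<bar>x - y\<bar> * B0) \<le> 240 * s / q^3 * (\<bar>x - y\<bar> * H)"
  proof -
    have "P * (\<bar>x - y\<bar> * B0) \<le> P * (\<bar>x - y\<bar> * (60 * E2 / sqrt l))"
      using B0b P0 by (intro mult_left_mono) auto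
    also have "\<dots> = 240 * s / q^3 * (\<bar>x - y\<bar> * H)" unfolding P_def H_def using sl0 q0
      by (simp add: field_simps)
    finally show ?thesis .
  qed
  have t3: "P * ((1 - \<rho>) * y * B0) \<le> 240 * s / q^3 * ((1 - \<rho>) * y * H)"
  proof -
    have "P * ((1 - \<rho>) * y * B0) \<le> P * ((1 - \<rho>) * y * (60 * E2 / sqrt l))"
      using B0b P0 rho y by (intro mult_left_mono) auto
    also have "\<dots> = 240 * s / q^3 * ((1 - \<rho>) * y * H)" unfolding P_def H_def using sl0 q0
      by (simp add: field_simps)
    finally show ?thesis .
  qed
  have sq: "s / q^3 \<ge> 0" using s0 q0 by simp
  have "P * \<bar>x * B1 - \<rho> * y * B0\<bar> \<le> P * (x * \<bar>B1 - B0\<bar> + \<bar>x - y\<bar> * B0 + (1 - \<rho>) * y * B0)"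
    using tri P0 by (intro mult_left_mono) auto
  also have "\<dots> = P * (x * \<bar>B1 - B0\<bar>) + P * (\<bar>x - y\<bar> * B0) + P * ((1 - \<rho>) * y * B0)"
    by (simp add: distrib_left)
  also have "\<dots> \<le> 4 * K * s / q^3 * (6 * q * G) + 240 * s / q^3 * (3 * q * G) + 240 * s / q^3 * (2 * q * G)"
  proof (intro add_mono)
    show "P * (x * \<bar>B1 - B0\<bar>) \<le> 4 * K * s / q^3 * (6 * q * G)"
    proof -
      have k: "0 \<le> 4 * K * s / q^3" using K0 s0 q0 by simp
      show ?thesis by (rule order.trans[OF t1 mult_left_mono[OF c k]])
    qed
    show "P * (\<bar>x - y\<bar> * B0) \<le> 240 * s / q^3 * (3 * q * G)"
    proof -
      have k: "0 \<le> 240 * s / q^3" using s0 q0 by simp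
      show ?thesis by (rule order.trans[OF t2 mult_left_mono[OF a k]])
    qed
    show "P * ((1 - \<rho>) * y * B0) \<le> 240 * s / q^3 * (2 * q * G)"
    proof -
      have k: "0 \<le> 240 * s / q^3" using s0 q0 by simp
      show ?thesis by (rule order.trans[OF t3 mult_left_mono[OF b k]])
    qed
  qed
  also have "\<dots> = (1200 + 24 * K) * s * G / q^2" using q0 by (simp add: field_simps power2_eq_square power3_eq_cube)
  also have "\<dots> \<le> (1200 + 24 * K) * s * G / q^2 * Gam"
  proof -
    have Z0: "0 \<le> (1200 + 24 * K) * s * G / q^2" using K0 s0 G0 q0 by simp
    show ?thesis using mult_left_mono[OF Gam1 Z0] by simp
  qed
  finally have main: "P * \<bar>x * B1 - \<rho> * y * B0\<bar> \<le> (1200 + 24 * K) * s * G / q^2 * Gam" .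
  show ?thesis using main unfolding P_def Pre[symmetric] Ex_def[symmetric] B1_def[symmetric] B0_def[symmetric]
    unfolding s_def[symmetric] G_def[symmetric] Gam_def[symmetric] g_def[symmetric] dq[symmetric] K_def[symmetric]
    by (simp add: mult_ac)
qed


lemma sqrt_exp: "sqrt (exp a) = exp (a / 2)"
proof (rule real_sqrt_unique)
  show "(exp (a / 2))^2 = exp a" by (simp add: power2_eq_square exp_add[symmetric])
qed simp

lemma lin_aux: "a \<le> 2 * b \<Longrightarrow> 0 \<le> b \<Longrightarrow> 1 + a \<le> 2 * (1 + (b::real))"
  by (simp add: distrib_left)

lemma abs_prod_nonneg: "0 \<le> (p::real) \<Longrightarrow> \<bar>p * z\<bar> = p * \<bar>z\<bar>"
  by (simp add: abs_mult)

lemma core_bound: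
  assumes nu: "\<nu> > -1" and rho: "0 < \<rho>" "\<rho> < 1" and d: "d = 1 - \<rho>^2"
    and x: "x > 0" and y: "y > 0"
  shows "\<bar>(2 / d) * (2 * \<rho> * sqrt (x * y) / d) * exp (- (1/2) * ((1 + \<rho>^2) / d) * (x^2 + y^2))
      * (x * besselI (\<nu> + 1) (2 * \<rho> / d * x * y) - \<rho> * y * besselI \<nu> (2 * \<rho> / d * x * y))\<bar>
    \<le> (1200 + 24 * Kd \<nu>) * sqrt \<rho> / d * exp (- ((x - y)^2) / (8 * d)) * (1 + sqrt d / x) powr gamma_exp \<nu>"
proof -
  define l where "l = \<rho> * x * y / d"
  have d0: "d > 0" using rho d by (simp add: power_less_one_iff abs_less_iff)
  have w: "2 * \<rho> / d * x * y = 2 * l" by (simp add: l_def)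
  have Pre0: "(2 / d) * (2 * \<rho> * sqrt (x * y) / d) * exp (- (1/2) * ((1 + \<rho>^2) / d) * (x^2 + y^2)) \<ge> 0"
    using d0 rho x y by simp
  have ab: "\<bar>(2 / d) * (2 * \<rho> * sqrt (x * y) / d) * exp (- (1/2) * ((1 + \<rho>^2) / d) * (x^2 + y^2))
      * (x * besselI (\<nu> + 1) (2 * l) - \<rho> * y * besselI \<nu> (2 * l))\<bar>
    = (2 / d) * (2 * \<rho> * sqrt (x * y) / d) * exp (- (1/2) * ((1 + \<rho>^2) / d) * (x^2 + y^2))
      * \<bar>x * besselI (\<nu> + 1) (2 * l) - \<rho> * y * besselI \<nu> (2 * l)\<bar>"
    by (rule abs_prod_nonneg[OF Pre0])
  have G: "0 \<le> sqrt \<rho> / d * exp (- ((x - y)^2) / (8 * d)) * (1 + sqrt d / x) powr gamma_exp \<nu>"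
    using rho d0 by simp
  show ?thesis unfolding w ab
  proof (cases "l \<le> 1")
    case True
    have "(2 / d) * (2 * \<rho> * sqrt (x * y) / d) * exp (- (1/2) * ((1 + \<rho>^2) / d) * (x^2 + y^2))
      * \<bar>x * besselI (\<nu> + 1) (2 * l) - \<rho> * y * besselI \<nu> (2 * l)\<bar>
      \<le> 120 * sqrt \<rho> / d * exp (- ((x - y)^2) / (8 * d)) * (1 + sqrt d / x) powr gamma_exp \<nu>"
      by (rule caseA[OF nu rho d x y l_def True])
    also have "\<dots> \<le> (1200 + 24 * Kd \<nu>) * sqrt \<rho> / d * exp (- ((x - y)^2) / (8 * d)) * (1 + sqrt d / x) powr gamma_exp \<nu>"
    proof -
      have "120 \<le> 1200 + 24 * Kd \<nu>" using Kd_pos[OF nu] by simp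
      then have "120 * (sqrt \<rho> / d * exp (- ((x - y)^2) / (8 * d)) * (1 + sqrt d / x) powr gamma_exp \<nu>)
          \<le> (1200 + 24 * Kd \<nu>) * (sqrt \<rho> / d * exp (- ((x - y)^2) / (8 * d)) * (1 + sqrt d / x) powr gamma_exp \<nu>)"
        using G by (intro mult_right_mono) auto
      then show ?thesis by (simp add: mult.assoc)
    qed
    finally show "(2 / d) * (2 * \<rho> * sqrt (x * y) / d) * exp (- (1/2) * ((1 + \<rho>^2) / d) * (x^2 + y^2))
      * \<bar>x * besselI (\<nu> + 1) (2 * l) - \<rho> * y * besselI \<nu> (2 * l)\<bar>
      \<le> (1200 + 24 * Kd \<nu>) * sqrt \<rho> / d * exp (- ((x - y)^2) / (8 * d)) * (1 + sqrt d / x) powr gamma_exp \<nu>" .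
  next
    case False
    then show "(2 / d) * (2 * \<rho> * sqrt (x * y) / d) * exp (- (1/2) * ((1 + \<rho>^2) / d) * (x^2 + y^2))
      * \<bar>x * besselI (\<nu> + 1) (2 * l) - \<rho> * y * besselI \<nu> (2 * l)\<bar>
      \<le> (1200 + 24 * Kd \<nu>) * sqrt \<rho> / d * exp (- ((x - y)^2) / (8 * d)) * (1 + sqrt d / x) powr gamma_exp \<nu>"
      by (intro caseB[OF nu rho d x y l_def]) simp
  qed
qed

theorem proposition3p4:
  fixes \<nu> :: real
  assumes "\<nu> > -1"
  shows "\<exists>C c. C > 0 \<and> c > 0 \<and>
    (\<forall>t x y. t > 0 \<longrightarrow> x > 0 \<longrightarrow> y > 0 \<longrightarrow>
      \<bar>delta_star \<nu> (\<lambda>z. laguerre_heat_kernel (\<nu> + 1) t z y) x\<bar>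
        \<le> C / t * exp (- (\<bar>x - y\<bar>^2) / (c * t)) * (1 + sqrt t / x) powr (gamma_exp \<nu>))"
proof -
  define g where "g = gamma_exp \<nu>"
  define K where "K = 1200 + 24 * Kd \<nu>"
  have K0: "K > 0" unfolding K_def using Kd_pos[OF assms] by simp
  have g0: "g \<ge> 0" by (simp add: g_def gamma_exp_def)
  define C where "C = K * (5/4) * 2 powr g"
  have C0: "C > 0" unfolding C_def using K0 by simp
  have main: "\<bar>delta_star \<nu> (\<lambda>z. laguerre_heat_kernel (\<nu> + 1) t z y) x\<bar>
        \<le> C / t * exp (- (\<bar>x - y\<bar>^2) / (32 * t)) * (1 + sqrt t / x) powr g"
    if t: "t > 0" and x: "x > 0" and y: "y > 0" for t x y
  proof -
    define r where "r = exp (-4 * t)"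
    define \<rho> where "\<rho> = sqrt r"
    define d where "d = 1 - r"
    have r01: "0 < r" "r < 1" using t by (auto simp: r_def)
    have rho: "0 < \<rho>" "\<rho> < 1" using r01 by (auto simp: \<rho>_def)
    have rr: "\<rho>^2 = r" using r01 by (simp add: \<rho>_def)
    have dd: "d = 1 - \<rho>^2" by (simp add: d_def rr)
    have d0: "d > 0" using r01 by (simp add: d_def)
    have srho: "sqrt \<rho> = exp (- t)" unfolding \<rho>_def r_def by (simp add: sqrt_exp)
    have d_le: "d \<le> 4 * t" using exp_ge_add_one_self[of "-4 * t"] by (simp add: d_def r_def)
    have d_ge: "d \<ge> 4 * t / (1 + 4 * t)"
    proof -
      have "exp (4 * t) \<ge> 1 + 4 * t" by (rule exp_ge_add_one_self)
      then have "r \<le> 1 / (1 + 4 * t)" using t unfolding r_def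
        by (simp add: exp_minus field_simps)
      then show ?thesis using t by (simp add: d_def field_simps)
    qed
    have delta: "delta_star \<nu> (\<lambda>z. laguerre_heat_kernel (\<nu> + 1) t z y) x =
       (2 / d) * (2 * \<rho> * sqrt (x * y) / d) * exp (- (1/2) * ((1 + \<rho>^2) / d) * (x^2 + y^2))
      * (x * besselI (\<nu> + 1) (2 * \<rho> / d * x * y) - \<rho> * y * besselI \<nu> (2 * \<rho> / d * x * y))"
      unfolding delta_formula[OF assms t x y] rr \<rho>_def d_def r_def by (simp add: mult.assoc)
    have core: "\<bar>delta_star \<nu> (\<lambda>z. laguerre_heat_kernel (\<nu> + 1) t z y) x\<bar>
        \<le> K * sqrt \<rho> / d * exp (- ((x - y)^2) / (8 * d)) * (1 + sqrt d / x) powr g"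
      unfolding delta K_def g_def by (rule core_bound[OF assms rho dd x y])
    have f1: "sqrt \<rho> / d \<le> (5/4) / t"
    proof -
      have "sqrt \<rho> / d \<le> exp (- t) / (4 * t / (1 + 4 * t))"
        unfolding srho using d_ge d0 t by (intro divide_left_mono) auto
      also have "\<dots> = exp (- t) / (4 * t) + exp (- t)" using t by (simp add: field_simps)
      also have "\<dots> \<le> 1 / (4 * t) + 1 / t"
      proof -
        have "exp (- t) \<le> 1" using t by simp
        then have a: "exp (- t) / (4 * t) \<le> 1 / (4 * t)" using t by (intro divide_right_mono) auto
        have "t \<le> exp t" using exp_ge_add_one_self[of t] by linarith
        then have "exp (- t) \<le> 1 / t" using t by (simp add: exp_minus field_simps)
        then show ?thesis using a by linarith
      qed
      also have "\<dots> = (5/4) / t" using t by (simp add: field_simps)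
      finally show ?thesis .
    qed
    have f2: "exp (- ((x - y)^2) / (8 * d)) \<le> exp (- (\<bar>x - y\<bar>^2) / (32 * t))"
    proof -
      have "(x - y)^2 / (32 * t) \<le> (x - y)^2 / (8 * d)"
        using d_le d0 t by (intro divide_left_mono) auto
      then show ?thesis by simp
    qed
    have f3: "(1 + sqrt d / x) powr g \<le> 2 powr g * (1 + sqrt t / x) powr g"
    proof -
      have "sqrt d \<le> sqrt (4 * t)" using d_le by simp
      also have "\<dots> = 2 * sqrt t" by (simp add: real_sqrt_mult)
      finally have "sqrt d / x \<le> 2 * sqrt t / x" using x by (intro divide_right_mono) auto
      then have "sqrt d / x \<le> 2 * (sqrt t / x)" by (simp only: times_divide_eq_right)
      then have "1 + sqrt d / x \<le> 2 * (1 + sqrt t / x)" using t x by (intro lin_aux) auto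
      then have "(1 + sqrt d / x) powr g \<le> (2 * (1 + sqrt t / x)) powr g"
        using g0 d0 x by (intro powr_mono2) auto
      also have "\<dots> = 2 powr g * (1 + sqrt t / x) powr g" by (rule powr_mult)
      finally show ?thesis .
    qed
    have "K * sqrt \<rho> / d * exp (- ((x - y)^2) / (8 * d)) * (1 + sqrt d / x) powr g
        = K * (sqrt \<rho> / d) * exp (- ((x - y)^2) / (8 * d)) * (1 + sqrt d / x) powr g" by simp
    also have "\<dots> \<le> K * ((5/4) / t) * exp (- (\<bar>x - y\<bar>^2) / (32 * t)) * (2 powr g * (1 + sqrt t / x) powr g)"
      using f1 f2 f3 K0 rho d0 t by (intro mult_mono mult_left_mono) auto
    also have "\<dots> = C / t * exp (- (\<bar>x - y\<bar>^2) / (32 * t)) * (1 + sqrt t / x) powr g"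
      unfolding C_def by (simp add: field_simps)
    finally show ?thesis using core by linarith
  qed
  show ?thesis
    by (rule exI[of _ C], rule exI[of _ 32]) (use C0 main in \<open>simp add: g_def\<close>)
qed


end
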